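(* Let $T:\mathbb{R}^M\times\cdots\times\mathbb{R}^M\to\mathbb{R}^D$ ($N$ factors) be a real $N$-linear contraction with respect to the Euclidean norm, and regard $T$ as the real $D\times M^N$ matrix with entries $T_{i,s}$, so that $T^\dagger T$ is a real symmetric matrix on $(\mathbb{R}^M)^{\otimes N}$. Then the following are equivalent: 1. $T$ has a norm-preserving dilation, i.e. there is a norm-preserving $N$-linear map $\tilde T:\mathbb{R}^M\times\cdots\times\mathbb{R}^M\to\mathbb{R}^{D'}$ with $D'\ge D$ whose first $D$ output coordinates coincide with $T$; 2. there is a real symmetric matrix $Q$ on $(\mathbb{R}^M)^{\otimes N}$ of the form $Q=\sum_gc_g\bigotimes_{k=1}^NG_{g_k}$ with $c_g=0$ whenever all components of $g$ are non-negative, such that $\mathbb{1}\ge T^\dagger T+Q$; 3. $\mathrm{tr}[\rho\,T^\dagger T]\le1$ for all real density matrices $\rho$ on $(\mathbb{R}^M)^{\otimes N}$ of the form $\rho=\sum_{g\ge0}c_g\bigotimes_{k=1}^NG_{g_k}$ (sum only over $g$ with all components non-negative).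
   Context: An $N$-linear map is $T(a^{(1)},\dots,a^{(N)})_i=\sum_{s\in\{1,\dots,M\}^N}T_{i,s}\prod_ka^{(k)}_{s_k}$; it is a contraction if $\|T(a^{(1)},\dots,a^{(N)})\|\le\prod_k\|a^{(k)}\|$ for all inputs and norm-preserving if equality always holds. $\{G_\gamma\}$ is a set of $M^2$ real $M\times M$ matrices forming a basis of all real $M\times M$ matrices, orthogonal w.r.t. $(X,Y)\mapsto\mathrm{tr}[XY^T]$, with $G_0=\mathbb{1}$, $G_\gamma$ symmetric for $\gamma\ge0$ and antisymmetric for $\gamma<0$, normalized by $\mathrm{tr}[G_\gamma G_{\gamma'}^T]=2\delta_{\gamma\gamma'}$ for $\gamma,\gamma'\ne0$; $g=(g_1,\dots,g_N)$ ranges over $N$-tuples of indices and $c_g\in\mathbb{R}$. A real density matrix is a real positive semidefinite matrix of trace one; $X\le Y$ means $Y-X$ is positive semidefinite. *)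

theory Defs
  imports Main "HOL-Library.Multiset" Complex_Main
begin

text \<open>Vectors in R^n are functions nat => real, only coordinates < n matter.
  Multi-indices s in {1..M}^N are lists of length N with entries < M (0-based).
  Inputs (a^(1),...,a^(N)) are given as a : nat => nat => real, a k j = j-th
  coordinate of the k-th input (k < N, j < M).\<close>

definition tuples :: "nat \<Rightarrow> nat \<Rightarrow> nat list set" where
  "tuples M N = {s. length s = N \<and> (\<forall>x\<in>set s. x < M)}"

definition vnorm :: "nat \<Rightarrow> (nat \<Rightarrow> real) \<Rightarrow> real" where
  "vnorm n v = sqrt (\<Sum>j<n. (v j)\<^sup>2)"

definition mlin_apply ::
  "nat \<Rightarrow> nat \<Rightarrow> (nat \<Rightarrow> nat list \<Rightarrow> real) \<Rightarrow> (nat \<Rightarrow> nat \<Rightarrow> real) \<Rightarrow> nat \<Rightarrow> real" where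
  "mlin_apply M N T a i = (\<Sum>s\<in>tuples M N. T i s * (\<Prod>k<N. a k (s ! k)))"

definition is_contraction ::
  "nat \<Rightarrow> nat \<Rightarrow> nat \<Rightarrow> (nat \<Rightarrow> nat list \<Rightarrow> real) \<Rightarrow> bool" where
  "is_contraction M N D T \<longleftrightarrow>
     (\<forall>a. vnorm D (mlin_apply M N T a) \<le> (\<Prod>k<N. vnorm M (a k)))"

definition is_norm_preserving ::
  "nat \<Rightarrow> nat \<Rightarrow> nat \<Rightarrow> (nat \<Rightarrow> nat list \<Rightarrow> real) \<Rightarrow> bool" where
  "is_norm_preserving M N D T \<longleftrightarrow>
     (\<forall>a. vnorm D (mlin_apply M N T a) = (\<Prod>k<N. vnorm M (a k)))"

definition has_np_dilation ::
  "nat \<Rightarrow> nat \<Rightarrow> nat \<Rightarrow> (nat \<Rightarrow> nat list \<Rightarrow> real) \<Rightarrow> bool" where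
  "has_np_dilation M N D T \<longleftrightarrow>
     (\<exists>D' (T' :: nat \<Rightarrow> nat list \<Rightarrow> real). D' \<ge> D \<and> is_norm_preserving M N D' T' \<and>
        (\<forall>a i. i < D \<longrightarrow> mlin_apply M N T' a i = mlin_apply M N T a i))"

text \<open>Matrices on (R^M)^{\<otimes>N}: functions on pairs of multi-indices.\<close>

definition TdagT :: "nat \<Rightarrow> (nat \<Rightarrow> nat list \<Rightarrow> real) \<Rightarrow> nat list \<Rightarrow> nat list \<Rightarrow> real" where
  "TdagT D T s t = (\<Sum>i<D. T i s * T i t)"

definition tensorG ::
  "nat \<Rightarrow> (int \<Rightarrow> nat \<Rightarrow> nat \<Rightarrow> real) \<Rightarrow> int list \<Rightarrow> nat list \<Rightarrow> nat list \<Rightarrow> real" where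
  "tensorG N G g s t = (\<Prod>k<N. G (g ! k) (s ! k) (t ! k))"

definition gtuples :: "int set \<Rightarrow> nat \<Rightarrow> int list set" where
  "gtuples \<Gamma> N = {g. length g = N \<and> set g \<subseteq> \<Gamma>}"

definition tensor_expansion ::
  "int set \<Rightarrow> nat \<Rightarrow> (int \<Rightarrow> nat \<Rightarrow> nat \<Rightarrow> real) \<Rightarrow> (int list \<Rightarrow> real) \<Rightarrow> nat list \<Rightarrow> nat list \<Rightarrow> real" where
  "tensor_expansion \<Gamma> N G c s t = (\<Sum>g\<in>gtuples \<Gamma> N. c g * tensorG N G g s t)"

definition all_nonneg :: "int list \<Rightarrow> bool" where
  "all_nonneg g \<longleftrightarrow> (\<forall>x\<in>set g. x \<ge> 0)"

definition msym_on :: "'i set \<Rightarrow> ('i \<Rightarrow> 'i \<Rightarrow> real) \<Rightarrow> bool" where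
  "msym_on I A \<longleftrightarrow> (\<forall>s\<in>I. \<forall>t\<in>I. A s t = A t s)"

definition psd_on :: "'i set \<Rightarrow> ('i \<Rightarrow> 'i \<Rightarrow> real) \<Rightarrow> bool" where
  "psd_on I A \<longleftrightarrow> msym_on I A \<and>
     (\<forall>x. (\<Sum>s\<in>I. \<Sum>t\<in>I. x s * A s t * x t) \<ge> 0)"

definition idm :: "'i \<Rightarrow> 'i \<Rightarrow> real" where
  "idm s t = (if s = t then 1 else 0)"

definition trace_on :: "'i set \<Rightarrow> ('i \<Rightarrow> 'i \<Rightarrow> real) \<Rightarrow> real" where
  "trace_on I A = (\<Sum>s\<in>I. A s s)"

definition mat_mult_on :: "'i set \<Rightarrow> ('i \<Rightarrow> 'i \<Rightarrow> real) \<Rightarrow> ('i \<Rightarrow> 'i \<Rightarrow> real) \<Rightarrow> 'i \<Rightarrow> 'i \<Rightarrow> real" where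
  "mat_mult_on I A B s t = (\<Sum>u\<in>I. A s u * B u t)"

definition mtr :: "nat \<Rightarrow> (nat \<Rightarrow> nat \<Rightarrow> real) \<Rightarrow> (nat \<Rightarrow> nat \<Rightarrow> real) \<Rightarrow> real" where
  "mtr M X Y = (\<Sum>i<M. \<Sum>j<M. X i j * Y i j)"  \<comment> \<open>tr[X Y^T]\<close>

definition valid_G_basis :: "nat \<Rightarrow> int set \<Rightarrow> (int \<Rightarrow> nat \<Rightarrow> nat \<Rightarrow> real) \<Rightarrow> bool" where
  "valid_G_basis M \<Gamma> G \<longleftrightarrow>
     finite \<Gamma> \<and> card \<Gamma> = M\<^sup>2 \<and> 0 \<in> \<Gamma> \<and>
     (\<forall>i<M. \<forall>j<M. G 0 i j = (if i = j then 1 else 0)) \<and>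
     (\<forall>\<gamma>\<in>\<Gamma>. \<gamma> \<ge> 0 \<longrightarrow> (\<forall>i<M. \<forall>j<M. G \<gamma> i j = G \<gamma> j i)) \<and>
     (\<forall>\<gamma>\<in>\<Gamma>. \<gamma> < 0 \<longrightarrow> (\<forall>i<M. \<forall>j<M. G \<gamma> i j = - G \<gamma> j i)) \<and>
     (\<forall>\<gamma>\<in>\<Gamma>. \<forall>\<gamma>'\<in>\<Gamma>. \<gamma> \<noteq> \<gamma>' \<longrightarrow> mtr M (G \<gamma>) (G \<gamma>') = 0) \<and>
     (\<forall>\<gamma>\<in>\<Gamma>. \<gamma> \<noteq> 0 \<longrightarrow> mtr M (G \<gamma>) (G \<gamma>) = 2) \<and>
     (\<forall>X :: nat \<Rightarrow> nat \<Rightarrow> real. \<exists>a :: int \<Rightarrow> real.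
        \<forall>i<M. \<forall>j<M. X i j = (\<Sum>\<gamma>\<in>\<Gamma>. a \<gamma> * G \<gamma> i j))"

end

theory Submission
  imports Defs
begin


lemma lists_Suc_eq:
  "{g. length g = Suc N \<and> set g \<subseteq> A} = (\<lambda>(a,g). a#g) ` (A \<times> {g. length g = N \<and> set g \<subseteq> A})"
  apply (rule set_eqI)
  apply (simp add: image_iff length_Suc_conv)
  apply (rule iffI)
   apply (elim exE conjE) apply simp
  apply force
  done

lemma finite_lists_len: "finite A \<Longrightarrow> finite {g. length g = N \<and> set g \<subseteq> A}"
  using finite_lists_length_eq[of A N] by (simp add: conj_commute)

lemma prod_sum_lists:
  fixes f :: "nat \<Rightarrow> 'a \<Rightarrow> real"
  assumes "finite A"
  shows "(\<Sum>g\<in>{g. length g = N \<and> set g \<subseteq> A}. \<Prod>k<N. f k (g!k)) = (\<Prod>k<N. \<Sum>a\<in>A. f k a)"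
proof (induction N arbitrary: f)
  case 0
  have "{g::'a list. length g = 0 \<and> set g \<subseteq> A} = {[]}" by auto
  then show ?case by simp
next
  case (Suc N)
  have inj: "inj_on (\<lambda>(a,g). a#g) (A \<times> {g. length g = N \<and> set g \<subseteq> A})"
    by (auto simp: inj_on_def)
  have "(\<Sum>g\<in>{g. length g = Suc N \<and> set g \<subseteq> A}. \<Prod>k<Suc N. f k (g!k))
      = (\<Sum>(a,g)\<in>A \<times> {g. length g = N \<and> set g \<subseteq> A}. \<Prod>k<Suc N. f k ((a#g)!k))"
    unfolding lists_Suc_eq by (subst sum.reindex[OF inj]) (simp add: case_prod_beta)
  also have "\<dots> = (\<Sum>a\<in>A. \<Sum>g\<in>{g. length g = N \<and> set g \<subseteq> A}. f 0 a * (\<Prod>k<N. f (Suc k) (g!k)))"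
    by (subst sum.cartesian_product[symmetric]) (simp del: prod.lessThan_Suc add: prod.lessThan_Suc_shift)
  also have "\<dots> = (\<Sum>a\<in>A. f 0 a * (\<Prod>k<N. \<Sum>a\<in>A. f (Suc k) a))"
  proof (rule sum.cong[OF refl])
    fix a assume "a \<in> A"
    have "(\<Sum>g\<in>{g. length g = N \<and> set g \<subseteq> A}. f 0 a * (\<Prod>k<N. f (Suc k) (g!k)))
       = f 0 a * (\<Sum>g\<in>{g. length g = N \<and> set g \<subseteq> A}. (\<Prod>k<N. f (Suc k) (g!k)))"
      by (simp add: sum_distrib_left)
    also have "\<dots> = f 0 a * (\<Prod>k<N. \<Sum>a\<in>A. f (Suc k) a)"
      using Suc.IH[of "\<lambda>k. f (Suc k)"] by simp
    finally show "(\<Sum>g\<in>{g. length g = N \<and> set g \<subseteq> A}. f 0 a * (\<Prod>k<N. f (Suc k) (g!k)))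
       = f 0 a * (\<Prod>k<N. \<Sum>a\<in>A. f (Suc k) a)" .
  qed
  also have "\<dots> = (\<Prod>k<Suc N. \<Sum>a\<in>A. f k a)"
    by (simp del: prod.lessThan_Suc add: prod.lessThan_Suc_shift sum_distrib_right)
  finally show ?case .
qed

lemma tuples_alt: "tuples M N = {s. length s = N \<and> set s \<subseteq> {..<M}}"
  unfolding tuples_def by auto

lemma finite_tuples: "finite (tuples M N)"
  unfolding tuples_alt by (rule finite_lists_len) simp

lemma prod_sum_tuples:
  fixes f :: "nat \<Rightarrow> nat \<Rightarrow> real"
  shows   "(\<Sum>s\<in>tuples M N. \<Prod>k<N. f k (s!k)) = (\<Prod>k<N. \<Sum>j<M. f k j)"
  unfolding tuples_alt by (rule prod_sum_lists) simp

lemma prod_sum_tuples2: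
  fixes f :: "nat \<Rightarrow> nat \<Rightarrow> nat \<Rightarrow> real"
  shows   "(\<Sum>s\<in>tuples M N. \<Sum>t\<in>tuples M N. \<Prod>k<N. f k (s!k) (t!k)) = (\<Prod>k<N. \<Sum>i<M. \<Sum>j<M. f k i j)"
proof -
  have "(\<Sum>s\<in>tuples M N. \<Sum>t\<in>tuples M N. \<Prod>k<N. f k (s!k) (t!k))
     = (\<Sum>s\<in>tuples M N. \<Prod>k<N. \<Sum>j<M. f k (s!k) j)"
    by (rule sum.cong[OF refl]) (rule prod_sum_tuples)
  also have "\<dots> = (\<Prod>k<N. \<Sum>i<M. \<Sum>j<M. f k i j)"
    by (rule prod_sum_tuples)
  finally show ?thesis .
qed




definition pv :: "nat \<Rightarrow> (nat \<Rightarrow> nat \<Rightarrow> real) \<Rightarrow> nat list \<Rightarrow> real" where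
  "pv N a s = (\<Prod>k<N. a k (s!k))"

definition qform :: "'i set \<Rightarrow> ('i \<Rightarrow> 'i \<Rightarrow> real) \<Rightarrow> ('i \<Rightarrow> real) \<Rightarrow> real" where
  "qform I A x = (\<Sum>s\<in>I. \<Sum>t\<in>I. x s * A s t * x t)"

definition inner_on :: "'i set \<Rightarrow> ('i \<Rightarrow> 'i \<Rightarrow> real) \<Rightarrow> ('i \<Rightarrow> 'i \<Rightarrow> real) \<Rightarrow> real" where
  "inner_on I A B = (\<Sum>s\<in>I. \<Sum>t\<in>I. A s t * B s t)"

lemma qform_sum:
  "qform I (\<lambda>s t. \<Sum>g\<in>S. c g * F g s t) x = (\<Sum>g\<in>S. c g * qform I (F g) x)"
  unfolding qform_def
  by (simp add: sum_distrib_left sum_distrib_right mult.assoc mult.left_commute sum.swap[of _ S])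

lemma vnorm_sq: "(vnorm n v)\<^sup>2 = (\<Sum>j<n. (v j)\<^sup>2)"
  unfolding vnorm_def by (simp add: sum_nonneg)

lemma mlin_sq: "(vnorm D (mlin_apply M N T a))\<^sup>2 = qform (tuples M N) (TdagT D T) (pv N a)"
proof -
  have "(vnorm D (mlin_apply M N T a))\<^sup>2 = (\<Sum>i<D. (\<Sum>s\<in>tuples M N. T i s * pv N a s)\<^sup>2)"
    by (simp add: vnorm_sq mlin_apply_def pv_def)
  also have "\<dots> = (\<Sum>i<D. \<Sum>s\<in>tuples M N. \<Sum>t\<in>tuples M N. pv N a s * (T i s * T i t) * pv N a t)"
    by (simp add: power2_eq_square sum_product mult.assoc mult.left_commute mult.commute)
  also have "\<dots> = qform (tuples M N) (TdagT D T) (pv N a)"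
    unfolding qform_def TdagT_def
    by (simp add: sum_distrib_left sum_distrib_right sum.swap[of _ "{..<D}"])
  finally show ?thesis .
qed

lemma qform_idm: assumes "finite I" shows "qform I idm x = (\<Sum>s\<in>I. x s * x s)"
  unfolding qform_def
proof (rule sum.cong[OF refl])
  fix s assume s: "s \<in> I"
  have "(\<Sum>t\<in>I. x s * idm s t * x t) = (\<Sum>t\<in>I. if s = t then x s * x t else 0)"
    by (rule sum.cong) (auto simp: idm_def)
  also have "\<dots> = x s * x s" using s assms by (simp add: sum.delta)
  finally show "(\<Sum>t\<in>I. x s * idm s t * x t) = x s * x s" .
qed

lemma prodnorm_sq: "(\<Prod>k<N. vnorm M (a k))\<^sup>2 = qform (tuples M N) idm (pv N a)"
proof -
  have "(\<Prod>k<N. vnorm M (a k))\<^sup>2 = (\<Prod>k<N. \<Sum>j<M. a k j * a k j)"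
    by (simp add: prod_power_distrib vnorm_sq power2_eq_square[symmetric] del: power2_eq_square)
  also have "\<dots> = (\<Sum>s\<in>tuples M N. \<Prod>k<N. a k (s!k) * a k (s!k))"
    by (rule prod_sum_tuples[symmetric])
  also have "\<dots> = qform (tuples M N) idm (pv N a)"
    by (simp add: qform_idm[OF finite_tuples] pv_def prod.distrib)
  finally show ?thesis .
qed

lemma qform_tensorG:
  "qform (tuples M N) (tensorG N G g) (pv N a)
   = (\<Prod>k<N. \<Sum>i<M. \<Sum>j<M. a k i * G (g!k) i j * a k j)"
proof -
  have "qform (tuples M N) (tensorG N G g) (pv N a)
     = (\<Sum>s\<in>tuples M N. \<Sum>t\<in>tuples M N. \<Prod>k<N. a k (s!k) * G (g!k) (s!k) (t!k) * a k (t!k))"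
    unfolding qform_def tensorG_def pv_def by (simp add: prod.distrib)
  also have "\<dots> = (\<Prod>k<N. \<Sum>i<M. \<Sum>j<M. a k i * G (g!k) i j * a k j)"
    by (rule prod_sum_tuples2)
  finally show ?thesis .
qed




lemma antisym_qf:
  assumes "\<forall>i<M. \<forall>j<M. H i j = - H j i"
  shows "(\<Sum>i<M. \<Sum>j<M. x i * H i j * x j) = (0::real)"
proof -
  have "(\<Sum>i<M. \<Sum>j<M. x i * H i j * x j) = (\<Sum>j<M. \<Sum>i<M. x i * H i j * x j)"
    by (rule sum.swap)
  also have "\<dots> = - (\<Sum>i<M. \<Sum>j<M. x i * H i j * x j)"
  proof -
    have "(\<Sum>j<M. \<Sum>i<M. x i * H i j * x j) = (\<Sum>j<M. \<Sum>i<M. - (x j * H j i * x i))"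
    proof (intro sum.cong refl)
      fix j i assume "j \<in> {..<M}" "i \<in> {..<M}"
      then have "H i j = - H j i" using assms by blast
      then show "x i * H i j * x j = - (x j * H j i * x i)" by simp
    qed
    then show ?thesis by (simp add: sum_negf)
  qed
  finally show ?thesis by simp
qed

lemma gtuples_nth: "g \<in> gtuples \<Gamma> N \<Longrightarrow> k < N \<Longrightarrow> g!k \<in> \<Gamma>"
  unfolding gtuples_def by auto

lemma not_nonneg_nth: "g \<in> gtuples \<Gamma> N \<Longrightarrow> \<not> all_nonneg g \<Longrightarrow> \<exists>k<N. g!k < 0"
  unfolding gtuples_def all_nonneg_def by (auto simp: in_set_conv_nth not_le)

lemma basis_antisym: "valid_G_basis M \<Gamma> G \<Longrightarrow> \<gamma> \<in> \<Gamma> \<Longrightarrow> \<gamma> < 0 \<Longrightarrow> \<forall>i<M. \<forall>j<M. G \<gamma> i j = - G \<gamma> j i"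
  unfolding valid_G_basis_def by blast

lemma basis_sym: "valid_G_basis M \<Gamma> G \<Longrightarrow> \<gamma> \<in> \<Gamma> \<Longrightarrow> \<gamma> \<ge> 0 \<Longrightarrow> \<forall>i<M. \<forall>j<M. G \<gamma> i j = G \<gamma> j i"
  unfolding valid_G_basis_def by blast

lemma finite_gtuples: "valid_G_basis M \<Gamma> G \<Longrightarrow> finite (gtuples \<Gamma> N)"
  unfolding valid_G_basis_def gtuples_def by (simp add: finite_lists_len)

lemma tensor_exp_eta: "tensor_expansion \<Gamma> N G c = (\<lambda>s t. \<Sum>g\<in>gtuples \<Gamma> N. c g * tensorG N G g s t)"
  unfolding tensor_expansion_def by (rule ext)+ simp

lemma tensor_exp_vanish:
  assumes B: "valid_G_basis M \<Gamma> G" and c: "\<forall>g. all_nonneg g \<longrightarrow> c g = 0"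
  shows "qform (tuples M N) (tensor_expansion \<Gamma> N G c) (pv N a) = 0"
proof -
  have "qform (tuples M N) (tensor_expansion \<Gamma> N G c) (pv N a)
      = (\<Sum>g\<in>gtuples \<Gamma> N. c g * qform (tuples M N) (tensorG N G g) (pv N a))"
    unfolding tensor_exp_eta by (rule qform_sum)
  also have "\<dots> = 0"
  proof (rule sum.neutral, rule ballI)
    fix g assume g: "g \<in> gtuples \<Gamma> N"
    show "c g * qform (tuples M N) (tensorG N G g) (pv N a) = 0"
    proof (cases "all_nonneg g")
      case True then show ?thesis using c by simp
    next
      case False
      then obtain k where k: "k < N" "g!k < 0" using not_nonneg_nth[OF g] by blast
      have "(\<Sum>i<M. \<Sum>j<M. a k i * G (g!k) i j * a k j) = 0"
        by (rule antisym_qf, rule basis_antisym[OF B gtuples_nth[OF g k(1)] k(2)])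
      then have "(\<Prod>k<N. \<Sum>i<M. \<Sum>j<M. a k i * G (g!k) i j * a k j) = 0"
        using k(1) by (intro prod_zero) auto
      then show ?thesis by (simp add: qform_tensorG)
    qed
  qed
  finally show ?thesis .
qed




lemma inner_sum:
  "inner_on I (\<lambda>s t. \<Sum>g\<in>S. c g * F g s t) B = (\<Sum>g\<in>S. c g * inner_on I (F g) B)"
  unfolding inner_on_def
  by (simp add: sum_distrib_left sum_distrib_right mult.assoc mult.left_commute sum.swap[of _ S])

lemma inner_tensorG:
  "inner_on (tuples M N) (tensorG N G g) (tensorG N G h) = (\<Prod>k<N. mtr M (G (g!k)) (G (h!k)))"
proof -
  have "inner_on (tuples M N) (tensorG N G g) (tensorG N G h)
     = (\<Sum>s\<in>tuples M N. \<Sum>t\<in>tuples M N. \<Prod>k<N. G (g!k) (s!k) (t!k) * G (h!k) (s!k) (t!k))"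
    unfolding inner_on_def tensorG_def by (simp add: prod.distrib)
  also have "\<dots> = (\<Prod>k<N. mtr M (G (g!k)) (G (h!k)))"
    unfolding mtr_def by (rule prod_sum_tuples2)
  finally show ?thesis .
qed

lemma basis_M_pos: "valid_G_basis M \<Gamma> G \<Longrightarrow> M > 0"
  unfolding valid_G_basis_def by (cases M) auto

lemma mtr_self_pos:
  assumes B: "valid_G_basis M \<Gamma> G" and "\<gamma> \<in> \<Gamma>"
  shows "mtr M (G \<gamma>) (G \<gamma>) > 0"
proof (cases "\<gamma> = 0")
  case True
  have "mtr M (G 0) (G 0) = (\<Sum>i<M. \<Sum>j<M. if i = j then 1 else 0)"
    unfolding mtr_def using B unfolding valid_G_basis_def by (intro sum.cong refl) auto
  also have "\<dots> = (\<Sum>i<M. 1)" by (intro sum.cong refl) (simp add: sum.delta)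
  also have "\<dots> = real M" by simp
  finally show ?thesis using True basis_M_pos[OF B] by simp
next
  case False then show ?thesis using B assms(2) unfolding valid_G_basis_def by simp
qed

lemma orth_tensorG:
  assumes B: "valid_G_basis M \<Gamma> G" and g: "g \<in> gtuples \<Gamma> N" and h: "h \<in> gtuples \<Gamma> N"
    and ne: "g \<noteq> h"
  shows "inner_on (tuples M N) (tensorG N G g) (tensorG N G h) = 0"
proof -
  have "length g = N" "length h = N" using g h unfolding gtuples_def by auto
  then obtain k where k: "k < N" "g!k \<noteq> h!k" using ne nth_equalityI by metis
  have "mtr M (G (g!k)) (G (h!k)) = 0"
    using B gtuples_nth[OF g k(1)] gtuples_nth[OF h k(1)] k(2) unfolding valid_G_basis_def by blast
  then show ?thesis unfolding inner_tensorG using k(1) by (intro prod_zero) auto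
qed

lemma self_tensorG_pos:
  assumes B: "valid_G_basis M \<Gamma> G" and g: "g \<in> gtuples \<Gamma> N"
  shows "inner_on (tuples M N) (tensorG N G g) (tensorG N G g) > 0"
  unfolding inner_tensorG
  by (rule prod_pos) (use mtr_self_pos[OF B gtuples_nth[OF g]] in auto)

lemma coeff_inner:
  assumes B: "valid_G_basis M \<Gamma> G" and h: "h \<in> gtuples \<Gamma> N"
  and X: "\<forall>s\<in>tuples M N. \<forall>t\<in>tuples M N. X s t = (\<Sum>g\<in>gtuples \<Gamma> N. x g * tensorG N G g s t)"
  shows "inner_on (tuples M N) X (tensorG N G h) = x h * inner_on (tuples M N) (tensorG N G h) (tensorG N G h)"
proof -
  have "inner_on (tuples M N) X (tensorG N G h) =
        inner_on (tuples M N) (\<lambda>s t. \<Sum>g\<in>gtuples \<Gamma> N. x g * tensorG N G g s t) (tensorG N G h)"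
    unfolding inner_on_def using X by (intro sum.cong refl) auto
  also have "\<dots> = (\<Sum>g\<in>gtuples \<Gamma> N. x g * inner_on (tuples M N) (tensorG N G g) (tensorG N G h))"
    by (rule inner_sum)
  also have "\<dots> = (\<Sum>g\<in>gtuples \<Gamma> N. if g = h then x h * inner_on (tuples M N) (tensorG N G h) (tensorG N G h) else 0)"
    by (intro sum.cong refl) (auto simp: orth_tensorG[OF B _ h])
  also have "\<dots> = x h * inner_on (tuples M N) (tensorG N G h) (tensorG N G h)"
    using h finite_gtuples[OF B] by (simp add: sum.delta)
  finally show ?thesis .
qed




lemma tuples_eq_iff:
  assumes "s \<in> tuples M N" "s0 \<in> tuples M N"
  shows "(\<Prod>k<N. if s!k = s0!k then 1 else 0 :: real) = (if s = s0 then 1 else 0)"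
proof -
  have l: "length s = N" "length s0 = N" using assms unfolding tuples_def by auto
  show ?thesis
  proof (cases "s = s0")
    case True then show ?thesis by simp
  next
    case False
    then obtain k where "k < N" "s!k \<noteq> s0!k" using l nth_equalityI by metis
    then show ?thesis using False by (intro trans[OF prod_zero]) auto
  qed
qed

lemma expansion:
  assumes B: "valid_G_basis M \<Gamma> G"
  shows "\<exists>x. \<forall>s\<in>tuples M N. \<forall>t\<in>tuples M N. X s t = (\<Sum>g\<in>gtuples \<Gamma> N. x g * tensorG N G g s t)"
proof -
  let ?I = "tuples M N"
  have "\<forall>Y::nat\<Rightarrow>nat\<Rightarrow>real. \<exists>a. \<forall>i<M. \<forall>j<M. Y i j = (\<Sum>\<gamma>\<in>\<Gamma>. a \<gamma> * G \<gamma> i j)"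
    using B unfolding valid_G_basis_def by blast
  then obtain A where A: "\<And>Y i j. i < M \<Longrightarrow> j < M \<Longrightarrow> Y i j = (\<Sum>\<gamma>\<in>\<Gamma>. A Y \<gamma> * G \<gamma> i j)"
    by metis
  define E where "E i0 j0 = (\<lambda>i j. if i = i0 \<and> j = j0 then 1 else (0::real))" for i0 j0 :: nat
  define \<beta> where "\<beta> s0 t0 g = (\<Prod>k<N. A (E (s0!k) (t0!k)) (g!k))" for s0 t0 :: "nat list" and g :: "int list"
  define x where "x g = (\<Sum>s0\<in>?I. \<Sum>t0\<in>?I. X s0 t0 * \<beta> s0 t0 g)" for g
  have fin: "finite \<Gamma>" using B unfolding valid_G_basis_def by blast
  have elem: "(if s = s0 \<and> t = t0 then 1 else 0) = (\<Sum>g\<in>gtuples \<Gamma> N. \<beta> s0 t0 g * tensorG N G g s t)"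
    if st: "s \<in> ?I" "t \<in> ?I" "s0 \<in> ?I" "t0 \<in> ?I" for s t s0 t0
  proof -
    have "(if s = s0 \<and> t = t0 then 1 else 0)
       = (\<Prod>k<N. if s!k = s0!k then 1 else 0 :: real) * (\<Prod>k<N. if t!k = t0!k then 1 else 0 :: real)"
      using tuples_eq_iff[OF st(1,3)] tuples_eq_iff[OF st(2,4)] by simp
    also have "\<dots> = (\<Prod>k<N. E (s0!k) (t0!k) (s!k) (t!k))"
      unfolding E_def prod.distrib[symmetric] by (intro prod.cong refl) auto
    also have "\<dots> = (\<Prod>k<N. \<Sum>\<gamma>\<in>\<Gamma>. A (E (s0!k) (t0!k)) \<gamma> * G \<gamma> (s!k) (t!k))"
    proof (intro prod.cong refl)
      fix k assume "k \<in> {..<N}"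
      then have "s!k < M" "t!k < M" using st unfolding tuples_def by auto
      then show "E (s0!k) (t0!k) (s!k) (t!k) = (\<Sum>\<gamma>\<in>\<Gamma>. A (E (s0!k) (t0!k)) \<gamma> * G \<gamma> (s!k) (t!k))"
        by (rule A)
    qed
    also have "\<dots> = (\<Sum>g\<in>gtuples \<Gamma> N. \<Prod>k<N. A (E (s0!k) (t0!k)) (g!k) * G (g!k) (s!k) (t!k))"
      unfolding gtuples_def by (rule prod_sum_lists[OF fin, symmetric])
    also have "\<dots> = (\<Sum>g\<in>gtuples \<Gamma> N. \<beta> s0 t0 g * tensorG N G g s t)"
      unfolding \<beta>_def tensorG_def by (simp add: prod.distrib)
    finally show ?thesis .
  qed
  have "X s t = (\<Sum>g\<in>gtuples \<Gamma> N. x g * tensorG N G g s t)" if st: "s \<in> ?I" "t \<in> ?I" for s t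
  proof -
    have "X s t = (\<Sum>s0\<in>?I. \<Sum>t0\<in>?I. X s0 t0 * (if s = s0 \<and> t = t0 then 1 else 0))"
    proof -
      have "(\<Sum>s0\<in>?I. \<Sum>t0\<in>?I. X s0 t0 * (if s = s0 \<and> t = t0 then 1 else 0))
          = (\<Sum>s0\<in>?I. if s = s0 then X s0 t else 0)"
        using st finite_tuples by (intro sum.cong refl) (auto simp: if_distrib cong: if_cong)
      also have "\<dots> = X s t" using st finite_tuples by (simp add: sum.delta)
      finally show ?thesis by simp
    qed
    also have "\<dots> = (\<Sum>s0\<in>?I. \<Sum>t0\<in>?I. X s0 t0 * (\<Sum>g\<in>gtuples \<Gamma> N. \<beta> s0 t0 g * tensorG N G g s t))"
      using st elem by (intro sum.cong refl) simp
    also have "\<dots> = (\<Sum>g\<in>gtuples \<Gamma> N. x g * tensorG N G g s t)"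
      unfolding x_def
      by (simp add: sum_distrib_left sum_distrib_right mult.assoc sum.swap[of _ "gtuples \<Gamma> N"])
    finally show ?thesis .
  qed
  then show ?thesis by blast
qed




definition PP :: "nat \<Rightarrow> (nat \<times> nat \<times> nat) set" where
  "PP M = {..<M} \<times> {..<M} \<times> {0,1,2}"

definition ww :: "nat \<times> nat \<times> nat \<Rightarrow> nat \<Rightarrow> real" where
  "ww p a = (case p of (i,j,r) \<Rightarrow>
     if r = 1 then (if i = a then 1 else 0) else if r = 2 then (if j = a then 1 else 0)
     else (if i = a then 1 else 0) + (if j = a then 1 else 0))"

definition mu :: "(nat \<Rightarrow> nat \<Rightarrow> real) \<Rightarrow> nat \<times> nat \<times> nat \<Rightarrow> real" where
  "mu H p = (case p of (i,j,r) \<Rightarrow> if r = 0 then H i j / 2 else - H i j / 2)"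

lemma finite_PP: "finite (PP M)" unfolding PP_def by simp

lemma triple_sum: "(\<Sum>p\<in>A \<times> B \<times> C. (f::_\<Rightarrow>real) p) = (\<Sum>i\<in>A. \<Sum>j\<in>B. \<Sum>r\<in>C. f (i,j,r))"
  by (simp add: sum.cartesian_product)

lemma dd1:
  fixes a b M :: nat and f :: "nat \<Rightarrow> nat \<Rightarrow> real"
  assumes "a < M" "b < M"
  shows "(\<Sum>i<M. \<Sum>j<M. f i j * (if i = a \<and> j = b then 1 else 0)) = f a b"
proof -
  have "(\<Sum>i<M. \<Sum>j<M. f i j * (if i = a \<and> j = b then 1 else 0)) = (\<Sum>i<M. if i = a then f a b else 0)"
  proof (rule sum.cong[OF refl])
    fix i assume "i \<in> {..<M}"
    show "(\<Sum>j<M. f i j * (if i = a \<and> j = b then 1 else 0)) = (if i = a then f a b else 0)"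
    proof (cases "i = a")
      case True
      have "(\<Sum>j<M. f i j * (if i = a \<and> j = b then 1 else 0)) = (\<Sum>j<M. if j = b then f i j else 0)"
        using True by (intro sum.cong refl) simp
      also have "\<dots> = f i b" using assms by simp
      finally show ?thesis using True by simp
    qed simp
  qed
  also have "\<dots> = f a b" using assms by simp
  finally show ?thesis .
qed

lemma dd2:
  fixes a b M :: nat and f :: "nat \<Rightarrow> nat \<Rightarrow> real"
  assumes "a < M" "b < M"
  shows "(\<Sum>i<M. \<Sum>j<M. f i j * (if j = a \<and> i = b then 1 else 0)) = f b a"
proof -
  have "(\<Sum>i<M. \<Sum>j<M. f i j * (if j = a \<and> i = b then 1 else 0)) = (\<Sum>i<M. \<Sum>j<M. f i j * (if i = b \<and> j = a then 1 else 0))"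
    by (intro sum.cong refl) (simp add: conj_commute)
  then show ?thesis using dd1[OF assms(2,1)] by simp
qed
lemma sym_decomp:
  assumes sym: "\<forall>i<M. \<forall>j<M. H i j = H j i" and ab: "a < M" "b < M"
  shows "H a b = (\<Sum>p\<in>PP M. mu H p * ww p a * ww p b)"
proof -
  have "(\<Sum>p\<in>PP M. mu H p * ww p a * ww p b)
      = (\<Sum>i<M. \<Sum>j<M. \<Sum>r\<in>{0::nat,1,2}. mu H (i,j,r) * ww (i,j,r) a * ww (i,j,r) b)"
    unfolding PP_def by (rule triple_sum)
  also have "\<dots> = (\<Sum>i<M. \<Sum>j<M. H i j / 2 * ((if i = a \<and> j = b then 1 else 0) + (if j = a \<and> i = b then 1 else 0)))"
  proof (intro sum.cong refl)
    fix i j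
    show "(\<Sum>r\<in>{0::nat,1,2}. mu H (i,j,r) * ww (i,j,r) a * ww (i,j,r) b) =
      H i j / 2 * ((if i = a \<and> j = b then 1 else 0) + (if j = a \<and> i = b then 1 else 0))"
      by (cases "i = a"; cases "j = a"; cases "i = b"; cases "j = b") (simp_all add: mu_def ww_def)
  qed
  also have "\<dots> = (\<Sum>i<M. \<Sum>j<M. H i j / 2 * (if i = a \<and> j = b then 1 else 0))
                 + (\<Sum>i<M. \<Sum>j<M. H i j / 2 * (if j = a \<and> i = b then 1 else 0))"
    by (simp only: distrib_left sum.distrib)
  also have "\<dots> = H a b / 2 + H b a / 2"
    using dd1[OF ab, of "\<lambda>i j. H i j / 2"] dd2[OF ab, of "\<lambda>i j. H i j / 2"] by simp
  also have "\<dots> = H a b" proof -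
    have "H b a = H a b" using sym ab by blast
    then show ?thesis by simp
  qed
  finally show ?thesis by simp
qed




lemma vanish_imp_orth:
  assumes B: "valid_G_basis M \<Gamma> G" and g: "g \<in> gtuples \<Gamma> N" and nn: "all_nonneg g"
    and X0: "\<forall>a. qform (tuples M N) X (pv N a) = 0"
  shows "inner_on (tuples M N) X (tensorG N G g) = 0"
proof -
  let ?I = "tuples M N"
  let ?L = "{\<pi>. length \<pi> = N \<and> set \<pi> \<subseteq> PP M}"
  define coef where "coef \<pi> = (\<Prod>k<N. mu (G (g!k)) (\<pi>!k))" for \<pi>
  define av where "av \<pi> = (\<lambda>k j. ww (\<pi>!k) j)" for \<pi> :: "(nat\<times>nat\<times>nat) list"
  have tg: "tensorG N G g s t = (\<Sum>\<pi>\<in>?L. coef \<pi> * (pv N (av \<pi>) s * pv N (av \<pi>) t))"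
    if st: "s \<in> ?I" "t \<in> ?I" for s t
  proof -
    have "tensorG N G g s t = (\<Prod>k<N. \<Sum>p\<in>PP M. mu (G (g!k)) p * ww p (s!k) * ww p (t!k))"
      unfolding tensorG_def
    proof (rule prod.cong[OF refl])
      fix k assume k: "k \<in> {..<N}"
      then have "s!k < M" "t!k < M" using st unfolding tuples_def by auto
      moreover have "\<forall>i<M. \<forall>j<M. G (g!k) i j = G (g!k) j i"
        apply (rule basis_sym[OF B gtuples_nth[OF g]])
        using k apply simp
        using nn g k unfolding all_nonneg_def gtuples_def by auto
      ultimately show "G (g!k) (s!k) (t!k) = (\<Sum>p\<in>PP M. mu (G (g!k)) p * ww p (s!k) * ww p (t!k))"
        using sym_decomp by blast
    qed
    also have "\<dots> = (\<Sum>\<pi>\<in>?L. \<Prod>k<N. mu (G (g!k)) (\<pi>!k) * ww (\<pi>!k) (s!k) * ww (\<pi>!k) (t!k))"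
      by (rule prod_sum_lists[OF finite_PP, symmetric])
    also have "\<dots> = (\<Sum>\<pi>\<in>?L. coef \<pi> * (pv N (av \<pi>) s * pv N (av \<pi>) t))"
      unfolding coef_def pv_def av_def by (simp add: prod.distrib mult.assoc)
    finally show ?thesis .
  qed
  have "inner_on ?I X (tensorG N G g)
      = (\<Sum>s\<in>?I. \<Sum>t\<in>?I. X s t * (\<Sum>\<pi>\<in>?L. coef \<pi> * (pv N (av \<pi>) s * pv N (av \<pi>) t)))"
    unfolding inner_on_def using tg by (intro sum.cong refl) simp
  also have "\<dots> = (\<Sum>\<pi>\<in>?L. coef \<pi> * qform ?I X (pv N (av \<pi>)))"
    unfolding qform_def
    by (simp add: sum_distrib_left sum_distrib_right mult.assoc mult.left_commute mult.commute sum.swap[of _ ?L])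
  also have "\<dots> = 0" using X0 by simp
  finally show ?thesis .
qed




lemma qform_shift:
  assumes fin: "finite J" and p: "p \<in> J" and sym: "msym_on J R"
  shows "qform J R (\<lambda>s. x s + l * (if s = p then 1 else 0))
       = qform J R x + 2 * l * (\<Sum>t\<in>J. R p t * x t) + l\<^sup>2 * R p p"
proof -
  have A: "(\<Sum>s\<in>J. \<Sum>t\<in>J. (x s + l * (if s = p then 1 else 0)) * R s t * (x t + l * (if t = p then 1 else 0)))
     = (\<Sum>s\<in>J. \<Sum>t\<in>J. x s * R s t * x t) + (\<Sum>s\<in>J. \<Sum>t\<in>J. (if s = p then l * R p t * x t else 0))
       + (\<Sum>s\<in>J. \<Sum>t\<in>J. (if t = p then l * x s * R s p else 0))
       + (\<Sum>s\<in>J. \<Sum>t\<in>J. (if s = p then (if t = p then l * l * R p p else 0) else 0))"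
  proof -
    have pt: "\<And>s t. (x s + l * (if s = p then 1 else 0)) * R s t * (x t + l * (if t = p then 1 else 0))
      = x s * R s t * x t + (if s = p then l * R p t * x t else 0) + (if t = p then l * x s * R s p else 0)
        + (if s = p then (if t = p then l * l * R p p else 0) else 0)"
      by (case_tac "s = p"; case_tac "t = p") (simp_all add: algebra_simps)
    show ?thesis by (simp only: pt sum.distrib)
  qed
  have B: "(\<Sum>s\<in>J. \<Sum>t\<in>J. (if s = p then l * R p t * x t else 0)) = l * (\<Sum>t\<in>J. R p t * x t)"
  proof -
    have "(\<Sum>s\<in>J. \<Sum>t\<in>J. (if s = p then l * R p t * x t else 0))
       = (\<Sum>s\<in>J. if s = p then (\<Sum>t\<in>J. l * R p t * x t) else 0)"
    proof (rule sum.cong[OF refl])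
      fix s assume "s \<in> J"
      show "(\<Sum>t\<in>J. (if s = p then l * R p t * x t else 0)) = (if s = p then (\<Sum>t\<in>J. l * R p t * x t) else 0)"
        by (cases "s = p") simp_all
    qed
    also have "\<dots> = l * (\<Sum>t\<in>J. R p t * x t)"
      using fin p by (simp add: sum_distrib_left mult.assoc)
    finally show ?thesis .
  qed
  have C: "(\<Sum>s\<in>J. \<Sum>t\<in>J. (if t = p then l * x s * R s p else 0)) = l * (\<Sum>t\<in>J. R p t * x t)"
  proof -
    have "(\<Sum>s\<in>J. \<Sum>t\<in>J. (if t = p then l * x s * R s p else 0)) = (\<Sum>s\<in>J. l * x s * R s p)"
      using fin p by (simp add: sum.delta')
    also have "\<dots> = (\<Sum>s\<in>J. l * (R p s * x s))"
      using sym p unfolding msym_on_def by (intro sum.cong refl) auto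
    finally show ?thesis by (simp add: sum_distrib_left)
  qed
  have D: "(\<Sum>s\<in>J. \<Sum>t\<in>J. (if s = p then (if t = p then l * l * R p p else 0) else 0)) = l\<^sup>2 * R p p"
  proof -
    have "(\<Sum>s\<in>J. \<Sum>t\<in>J. (if s = p then (if t = p then l * l * R p p else 0) else 0))
       = (\<Sum>s\<in>J. if s = p then l * l * R p p else 0)"
    proof (rule sum.cong[OF refl])
      fix s assume "s \<in> J"
      show "(\<Sum>t\<in>J. (if s = p then (if t = p then l * l * R p p else 0) else 0)) = (if s = p then l * l * R p p else 0)"
        using fin p by (cases "s = p") simp_all
    qed
    also have "\<dots> = l\<^sup>2 * R p p" using fin p by (simp add: power2_eq_square)
    finally show ?thesis .
  qed
  show ?thesis unfolding qform_def A B C D by simp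
qed

lemma psd_cs:
  assumes fin: "finite J" and p: "p \<in> J" and R: "psd_on J R"
  shows "(\<Sum>t\<in>J. R p t * x t)\<^sup>2 \<le> R p p * qform J R x"
    and "R p p = 0 \<Longrightarrow> (\<Sum>t\<in>J. R p t * x t) = 0"
    and "R p p \<ge> 0"
proof -
  let ?b = "\<Sum>t\<in>J. R p t * x t" and ?q = "qform J R x"
  have sym: "msym_on J R" using R unfolding psd_on_def by blast
  have nn: "\<And>y. qform J R y \<ge> 0" using R unfolding psd_on_def qform_def by blast
  have key: "\<And>l. 0 \<le> ?q + 2 * l * ?b + l\<^sup>2 * R p p"
    using nn qform_shift[OF fin p sym] by metis
  have q0: "?q \<ge> 0" by (rule nn)
  have d0: "R p p \<ge> 0"
  proof -
    have "qform J R (\<lambda>s. 0 + 1 * (if s = p then 1 else 0)) = qform J R (\<lambda>s. 0) + 2 * 1 * (\<Sum>t\<in>J. R p t * 0) + 1\<^sup>2 * R p p"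
      by (rule qform_shift[OF fin p sym])
    moreover have "qform J R (\<lambda>s. 0) = 0" unfolding qform_def by simp
    ultimately show ?thesis using nn[of "\<lambda>s. 0 + 1 * (if s = p then 1 else 0)"] by simp
  qed
  then show "R p p \<ge> 0" .
  show z: "R p p = 0 \<Longrightarrow> ?b = 0"
  proof (rule ccontr)
    assume 0: "R p p = 0" and b: "?b \<noteq> 0"
    have "0 \<le> ?q + 2 * (- (?q + 1) / (2 * ?b)) * ?b + (- (?q + 1) / (2 * ?b))\<^sup>2 * R p p"
      by (rule key)
    also have "\<dots> = -1" using 0 b by (simp add: field_simps)
    finally show False by simp
  qed
  show "?b\<^sup>2 \<le> R p p * ?q"
  proof (cases "R p p = 0")
    case True then show ?thesis using z by simp
  next
    case False
    then have pos: "R p p > 0" using d0 by simp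
    have "0 \<le> ?q + 2 * (- ?b / R p p) * ?b + (- ?b / R p p)\<^sup>2 * R p p"
      by (rule key)
    also have "\<dots> = ?q - ?b\<^sup>2 / R p p" using pos by (simp add: field_simps power2_eq_square)
    finally have "?b\<^sup>2 / R p p \<le> ?q" by simp
    then show ?thesis using pos by (simp add: field_simps)
  qed
qed




lemma qform_restrict:
  assumes "finite F" "p \<notin> F"
  shows "qform (insert p F) A (\<lambda>s. if s \<in> F then x s else 0) = qform F A x"
  unfolding qform_def using assms by (simp add: sum.insert)

lemma psd_factor:
  assumes "finite I" "psd_on I R"
  shows "\<exists>(m::nat) S. \<forall>s\<in>I. \<forall>t\<in>I. R s t = (\<Sum>i<m. S i s * S i t)"
  using assms
proof (induction I arbitrary: R rule: finite_induct)
  case empty then show ?case by auto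
next
  case (insert p F)
  let ?J = "insert p F"
  have finJ: "finite ?J" using insert by simp
  have pJ: "p \<in> ?J" by simp
  have sym: "msym_on ?J R" using insert.prems unfolding psd_on_def by blast
  define v where "v t = (if R p p = 0 then 0 else R p t / sqrt (R p p))" for t
  define R' where "R' s t = R s t - v s * v t" for s t
  have Rpp: "R p p \<ge> 0" using psd_cs(3)[OF finJ pJ insert.prems] .
  have vsum: "(\<Sum>t\<in>?J. v t * x t)\<^sup>2 \<le> qform ?J R x" for x
  proof (cases "R p p = 0")
    case True then show ?thesis using insert.prems unfolding v_def psd_on_def qform_def by simp
  next
    case False
    then have pos: "R p p > 0" using Rpp by simp
    have "(\<Sum>t\<in>?J. v t * x t) = (\<Sum>t\<in>?J. R p t * x t) / sqrt (R p p)"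
      using False unfolding v_def by (simp add: sum_divide_distrib)
    then have "(\<Sum>t\<in>?J. v t * x t)\<^sup>2 = (\<Sum>t\<in>?J. R p t * x t)\<^sup>2 / R p p"
      using pos by (simp add: power_divide)
    also have "\<dots> \<le> qform ?J R x"
      using psd_cs(1)[OF finJ pJ insert.prems, of x] pos by (simp add: field_simps)
    finally show ?thesis .
  qed
  have qR': "qform ?J R' x = qform ?J R x - (\<Sum>t\<in>?J. v t * x t)\<^sup>2" for x
  proof -
    have "(\<Sum>t\<in>?J. v t * x t)\<^sup>2 = (\<Sum>s\<in>?J. \<Sum>t\<in>?J. (v s * x s) * (v t * x t))"
      by (simp add: power2_eq_square sum_product)
    moreover have "\<And>s t. x s * R' s t * x t = x s * R s t * x t - (v s * x s) * (v t * x t)"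
      unfolding R'_def by (simp add: algebra_simps)
    ultimately show ?thesis unfolding qform_def by (simp add: sum_subtractf)
  qed
  have psdF: "psd_on F R'"
    unfolding psd_on_def
  proof
    show "msym_on F R'" using sym unfolding msym_on_def R'_def by auto
    show "\<forall>x. 0 \<le> (\<Sum>s\<in>F. \<Sum>t\<in>F. x s * R' s t * x t)"
    proof
      fix x
      have "0 \<le> qform ?J R' (\<lambda>s. if s \<in> F then x s else 0)"
        using qR' vsum by (simp add: qR')
      then show "0 \<le> (\<Sum>s\<in>F. \<Sum>t\<in>F. x s * R' s t * x t)"
        using qform_restrict[OF insert.hyps] unfolding qform_def by simp
    qed
  qed
  obtain m :: nat and S where S: "\<forall>s\<in>F. \<forall>t\<in>F. R' s t = (\<Sum>i<m. S i s * S i t)"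
    using insert.IH[OF psdF] by blast
  define S' where "S' i s = (if i < m then (if s = p then 0 else S i s) else v s)" for i s
  have vpv: "v p * v t = R p t" if tJ: "t \<in> ?J" for t
  proof (cases "R p p = 0")
    case True
    have "(\<Sum>u\<in>?J. R p u * (if u = t then 1 else 0)) = 0"
      using psd_cs(2)[OF finJ pJ insert.prems True] .
    then have "t \<in> ?J \<Longrightarrow> R p t = 0" using finJ by (simp add: if_distrib cong: if_cong)
    then show ?thesis using True tJ unfolding v_def by simp
  next
    case False
    then have pos: "R p p > 0" using Rpp by simp
    then show ?thesis unfolding v_def using False
      by (simp add: field_simps)
  qed
  have "R s t = (\<Sum>i<Suc m. S' i s * S' i t)" if st: "s \<in> ?J" "t \<in> ?J" for s t
  proof -
    have split: "(\<Sum>i<Suc m. S' i s * S' i t) = (\<Sum>i<m. (if s = p then 0 else S i s) * (if t = p then 0 else S i t)) + v s * v t"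
      unfolding S'_def by simp
    show ?thesis
    proof (cases "s = p")
      case True then show ?thesis using split vpv[OF st(2)] by simp
    next
      case sp: False
      show ?thesis
      proof (cases "t = p")
        case True
        have "R s p = R p s" using sym st unfolding msym_on_def by auto
        then show ?thesis using True split vpv[OF st(1)] by (simp add: mult.commute)
      next
        case False
        then have "s \<in> F" "t \<in> F" using sp st by auto
        then have "R s t - v s * v t = (\<Sum>i<m. S i s * S i t)" using S unfolding R'_def by blast
        then show ?thesis using split sp False by simp
      qed
    qed
  qed
  then show ?case by blast
qed




lemma sum_lessThan_add:
  fixes f :: "nat \<Rightarrow> real" and D m :: nat
  shows "(\<Sum>i<D+m. f i) = (\<Sum>i<D. f i) + (\<Sum>j<m. f (D+j))"
  by (induction m) (simp_all add: algebra_simps)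

lemma qform_cong: "(\<forall>s\<in>I. \<forall>t\<in>I. A s t = B s t) \<Longrightarrow> qform I A x = qform I B x"
  unfolding qform_def by (intro sum.cong refl) auto

lemma inner_cong: "(\<forall>s\<in>I. \<forall>t\<in>I. A s t = B s t) \<Longrightarrow> inner_on I A C = inner_on I B C"
  unfolding inner_on_def by (intro sum.cong refl) auto

lemma qform_diff: "qform I (\<lambda>s t. A s t - B s t) x = qform I A x - qform I B x"
  unfolding qform_def by (simp add: algebra_simps sum_subtractf)

lemma inner_comm: "inner_on I A B = inner_on I B A"
  unfolding inner_on_def by (simp add: mult.commute)

lemma gram_psd:
  assumes "finite K"
  shows "psd_on I (\<lambda>s t. \<Sum>i\<in>K. S i s * S i t)"
  unfolding psd_on_def
proof
  show "msym_on I (\<lambda>s t. \<Sum>i\<in>K. S i s * S i t)" unfolding msym_on_def by (simp add: mult.commute)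
  show "\<forall>x. 0 \<le> (\<Sum>s\<in>I. \<Sum>t\<in>I. x s * (\<Sum>i\<in>K. S i s * S i t) * x t)"
  proof
    fix x
    have sq: "\<And>i. (\<Sum>s\<in>I. x s * S i s)\<^sup>2 = (\<Sum>s\<in>I. \<Sum>t\<in>I. x s * (S i s * (S i t * x t)))"
      by (simp add: power2_eq_square sum_product mult_ac)
    have "(\<Sum>s\<in>I. \<Sum>t\<in>I. x s * (\<Sum>i\<in>K. S i s * S i t) * x t) = (\<Sum>i\<in>K. (\<Sum>s\<in>I. x s * S i s)\<^sup>2)"
      unfolding sq
      by (simp add: sum_distrib_left sum_distrib_right mult.assoc mult.left_commute sum.swap[of _ K])
    then show "0 \<le> (\<Sum>s\<in>I. \<Sum>t\<in>I. x s * (\<Sum>i\<in>K. S i s * S i t) * x t)" by (simp add: sum_nonneg)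
  qed
qed

lemma char_orth:
  assumes B: "valid_G_basis M \<Gamma> G"
    and O: "\<forall>g\<in>gtuples \<Gamma> N. P g \<longrightarrow> inner_on (tuples M N) X (tensorG N G g) = 0"
  shows "\<exists>c. (\<forall>g. P g \<longrightarrow> c g = 0) \<and>
             (\<forall>s\<in>tuples M N. \<forall>t\<in>tuples M N. X s t = tensor_expansion \<Gamma> N G c s t)"
proof -
  obtain x where x: "\<forall>s\<in>tuples M N. \<forall>t\<in>tuples M N. X s t = (\<Sum>g\<in>gtuples \<Gamma> N. x g * tensorG N G g s t)"
    using expansion[OF B] by blast
  have x0: "x g = 0" if g: "g \<in> gtuples \<Gamma> N" "P g" for g
  proof -
    have "x g * inner_on (tuples M N) (tensorG N G g) (tensorG N G g) = 0"
      using coeff_inner[OF B g(1) x] O g by simp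
    then show ?thesis using self_tensorG_pos[OF B g(1)] by simp
  qed
  define c where "c g = (if P g then 0 else x g)" for g
  have "X s t = tensor_expansion \<Gamma> N G c s t" if "s \<in> tuples M N" "t \<in> tuples M N" for s t
    unfolding tensor_expansion_def c_def using x that x0 by (auto intro!: sum.cong)
  moreover have "\<forall>g. P g \<longrightarrow> c g = 0" by (simp add: c_def)
  ultimately show ?thesis by blast
qed

lemma inner_texp:
  assumes B: "valid_G_basis M \<Gamma> G" and h: "h \<in> gtuples \<Gamma> N"
  shows "inner_on (tuples M N) (tensor_expansion \<Gamma> N G c) (tensorG N G h)
       = c h * inner_on (tuples M N) (tensorG N G h) (tensorG N G h)"
  by (rule coeff_inner[OF B h]) (simp add: tensor_expansion_def)

lemma mlin_indicator:
  assumes s: "s \<in> tuples M N"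
  shows "mlin_apply M N T (\<lambda>k j. if j = s!k then 1 else 0) i = T i s"
proof -
  have "mlin_apply M N T (\<lambda>k j. if j = s!k then 1 else 0) i = (\<Sum>s'\<in>tuples M N. T i s' * (if s' = s then 1 else 0))"
    unfolding mlin_apply_def by (intro sum.cong refl) (simp add: tuples_eq_iff[OF _ s])
  also have "\<dots> = T i s" using s finite_tuples by (simp add: if_distrib cong: if_cong)
  finally show ?thesis .
qed

lemma vnorm_nonneg: "vnorm n v \<ge> 0" unfolding vnorm_def by (intro real_sqrt_ge_zero sum_nonneg) simp




lemma one_two:
  assumes B: "valid_G_basis M \<Gamma> G" and dil: "has_np_dilation M N D T"
  shows "\<exists>c. (\<forall>g. all_nonneg g \<longrightarrow> c g = 0) \<and>
                msym_on (tuples M N) (tensor_expansion \<Gamma> N G c) \<and>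
                psd_on (tuples M N)
                  (\<lambda>s t. idm s t - TdagT D T s t - tensor_expansion \<Gamma> N G c s t)"
proof -
  let ?I = "tuples M N"
  obtain D' T' where DD: "D' \<ge> D" and np: "is_norm_preserving M N D' T'"
    and agree: "\<forall>a i. i < D \<longrightarrow> mlin_apply M N T' a i = mlin_apply M N T a i"
    using dil unfolding has_np_dilation_def by blast
  have TT: "T' i s = T i s" if "i < D" "s \<in> ?I" for i s
    using agree mlin_indicator[OF that(2), of T' i] mlin_indicator[OF that(2), of T i] that(1) by metis
  define X where "X s t = TdagT D' T' s t - idm s t" for s t
  have X0: "\<forall>a. qform ?I X (pv N a) = 0"
  proof
    fix a
    have "vnorm D' (mlin_apply M N T' a) = (\<Prod>k<N. vnorm M (a k))"
      using np unfolding is_norm_preserving_def by blast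
    then have "qform ?I (TdagT D' T') (pv N a) = qform ?I idm (pv N a)"
    proof -
      have e1: "(vnorm D' (mlin_apply M N T' a))\<^sup>2 = qform ?I (TdagT D' T') (pv N a)" by (rule mlin_sq)
      have e2: "(\<Prod>k<N. vnorm M (a k))\<^sup>2 = qform ?I idm (pv N a)" by (rule prodnorm_sq)
      show ?thesis using e1 e2 \<open>vnorm D' (mlin_apply M N T' a) = (\<Prod>k<N. vnorm M (a k))\<close> by simp
    qed
    then show "qform ?I X (pv N a) = 0"
      unfolding X_def by (simp add: qform_diff[of _ "TdagT D' T'" idm, unfolded])
  qed
  have "\<forall>g\<in>gtuples \<Gamma> N. all_nonneg g \<longrightarrow> inner_on ?I X (tensorG N G g) = 0"
    using vanish_imp_orth[OF B _ _ X0] by blast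
  then obtain d where d0: "\<forall>g. all_nonneg g \<longrightarrow> d g = 0"
    and dX: "\<forall>s\<in>?I. \<forall>t\<in>?I. X s t = tensor_expansion \<Gamma> N G d s t"
    using char_orth[OF B] by blast
  define c where "c g = - d g" for g
  have cX: "tensor_expansion \<Gamma> N G c s t = - X s t" if "s \<in> ?I" "t \<in> ?I" for s t
    using dX that unfolding c_def tensor_expansion_def by (simp add: sum_negf)
  define R where "R s t = (\<Sum>i\<in>{D..<D'}. T' i s * T' i t)" for s t
  have split: "{..<D'} = {..<D} \<union> {D..<D'}" using DD by auto
  have TR: "TdagT D' T' s t = TdagT D T s t + R s t" if "s \<in> ?I" "t \<in> ?I" for s t
  proof -
    have "TdagT D' T' s t = (\<Sum>i<D. T' i s * T' i t) + R s t"
      unfolding TdagT_def R_def split by (rule sum.union_disjoint) auto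
    also have "(\<Sum>i<D. T' i s * T' i t) = TdagT D T s t"
      unfolding TdagT_def using TT that by simp
    finally show ?thesis .
  qed
  have c0: "\<forall>g. all_nonneg g \<longrightarrow> c g = 0" using d0 unfolding c_def by simp
  have msym: "msym_on ?I (tensor_expansion \<Gamma> N G c)"
    unfolding msym_on_def
  proof (intro ballI)
    fix s t assume st: "s \<in> ?I" "t \<in> ?I"
    show "tensor_expansion \<Gamma> N G c s t = tensor_expansion \<Gamma> N G c t s"
      using cX[OF st] cX[OF st(2,1)] unfolding X_def TdagT_def idm_def by (simp add: mult.commute eq_commute)
  qed
  have "psd_on ?I R" unfolding R_def by (rule gram_psd) simp
  moreover have "\<forall>s\<in>?I. \<forall>t\<in>?I. idm s t - TdagT D T s t - tensor_expansion \<Gamma> N G c s t = R s t"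
    using cX TR unfolding X_def by simp
  ultimately have "psd_on ?I (\<lambda>s t. idm s t - TdagT D T s t - tensor_expansion \<Gamma> N G c s t)"
    unfolding psd_on_def msym_on_def by simp
  then show ?thesis using c0 msym by blast
qed




lemma inner_diff: "inner_on I A (\<lambda>s t. B s t - C s t) = inner_on I A B - inner_on I A C"
  unfolding inner_on_def by (simp add: right_diff_distrib sum_subtractf)

lemma two_one:
  assumes B: "valid_G_basis M \<Gamma> G"
    and c0: "\<forall>g. all_nonneg g \<longrightarrow> c g = 0"
    and P: "psd_on (tuples M N) (\<lambda>s t. idm s t - TdagT D T s t - tensor_expansion \<Gamma> N G c s t)"
  shows "has_np_dilation M N D T"
proof -
  let ?I = "tuples M N"
  let ?R = "\<lambda>s t. idm s t - TdagT D T s t - tensor_expansion \<Gamma> N G c s t"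
  obtain m :: nat and S where S: "\<forall>s\<in>?I. \<forall>t\<in>?I. ?R s t = (\<Sum>i<m. S i s * S i t)"
    using psd_factor[OF finite_tuples P] by blast
  define T' where "T' i s = (if i < D then T i s else S (i - D) s)" for i s
  have TT: "TdagT (D + m) T' s t = idm s t - tensor_expansion \<Gamma> N G c s t"
    if "s \<in> ?I" "t \<in> ?I" for s t
  proof -
    have "TdagT (D + m) T' s t = (\<Sum>i<D. T' i s * T' i t) + (\<Sum>j<m. T' (D+j) s * T' (D+j) t)"
      unfolding TdagT_def by (rule sum_lessThan_add)
    also have "\<dots> = TdagT D T s t + (\<Sum>j<m. S j s * S j t)"
      unfolding T'_def TdagT_def by simp
    also have "\<dots> = idm s t - tensor_expansion \<Gamma> N G c s t"
    proof -
      have "?R s t = (\<Sum>i<m. S i s * S i t)" using S that by blast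
      then show ?thesis by linarith
    qed
    finally show ?thesis .
  qed
  have np: "is_norm_preserving M N (D + m) T'"
    unfolding is_norm_preserving_def
  proof
    fix a
    have "(vnorm (D+m) (mlin_apply M N T' a))\<^sup>2 = qform ?I (TdagT (D + m) T') (pv N a)" by (rule mlin_sq)
    also have "\<dots> = qform ?I (\<lambda>s t. idm s t - tensor_expansion \<Gamma> N G c s t) (pv N a)"
      using TT by (intro qform_cong) auto
    also have "\<dots> = qform ?I idm (pv N a) - qform ?I (tensor_expansion \<Gamma> N G c) (pv N a)"
      by (rule qform_diff)
    also have "\<dots> = (\<Prod>k<N. vnorm M (a k))\<^sup>2"
      using tensor_exp_vanish[OF B c0] prodnorm_sq by simp
    finally have "(vnorm (D+m) (mlin_apply M N T' a))\<^sup>2 = (\<Prod>k<N. vnorm M (a k))\<^sup>2" .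
    moreover have "(\<Prod>k<N. vnorm M (a k)) \<ge> 0" by (intro prod_nonneg) (simp add: vnorm_nonneg)
    ultimately show "vnorm (D+m) (mlin_apply M N T' a) = (\<Prod>k<N. vnorm M (a k))"
      using vnorm_nonneg by (simp add: power2_eq_iff_nonneg)
  qed
  have "\<forall>a i. i < D \<longrightarrow> mlin_apply M N T' a i = mlin_apply M N T a i"
    unfolding mlin_apply_def T'_def by simp
  then show ?thesis unfolding has_np_dilation_def using np by (intro exI[of _ "D+m"] exI[of _ T']) simp
qed

lemma two_three:
  assumes B: "valid_G_basis M \<Gamma> G"
    and c0: "\<forall>g. all_nonneg g \<longrightarrow> c g = 0"
    and P: "psd_on (tuples M N) (\<lambda>s t. idm s t - TdagT D T s t - tensor_expansion \<Gamma> N G c s t)"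
    and d0: "\<forall>g. \<not> all_nonneg g \<longrightarrow> d g = 0"
    and rho: "psd_on (tuples M N) (tensor_expansion \<Gamma> N G d)"
    and tr: "trace_on (tuples M N) (tensor_expansion \<Gamma> N G d) = 1"
  shows "trace_on (tuples M N) (mat_mult_on (tuples M N) (tensor_expansion \<Gamma> N G d) (TdagT D T)) \<le> 1"
proof -
  let ?I = "tuples M N"
  let ?\<rho> = "tensor_expansion \<Gamma> N G d"
  let ?R = "\<lambda>s t. idm s t - TdagT D T s t - tensor_expansion \<Gamma> N G c s t"
  obtain m :: nat and S where S: "\<forall>s\<in>?I. \<forall>t\<in>?I. ?R s t = (\<Sum>i<m. S i s * S i t)"
    using psd_factor[OF finite_tuples P] by blast
  have "trace_on ?I (mat_mult_on ?I ?\<rho> (TdagT D T)) = inner_on ?I ?\<rho> (TdagT D T)"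
    unfolding trace_on_def mat_mult_on_def inner_on_def TdagT_def by (simp add: mult.commute)
  also have "\<dots> = inner_on ?I ?\<rho> (\<lambda>s t. idm s t - tensor_expansion \<Gamma> N G c s t - (\<Sum>i<m. S i s * S i t))"
    unfolding inner_on_def
  proof (intro sum.cong refl)
    fix s t assume "s \<in> ?I" "t \<in> ?I"
    then have "?R s t = (\<Sum>i<m. S i s * S i t)" using S by blast
    then have "TdagT D T s t = idm s t - tensor_expansion \<Gamma> N G c s t - (\<Sum>i<m. S i s * S i t)" by linarith
    then show "?\<rho> s t * TdagT D T s t = ?\<rho> s t * (idm s t - tensor_expansion \<Gamma> N G c s t - (\<Sum>i<m. S i s * S i t))" by simp
  qed
  also have "\<dots> = inner_on ?I ?\<rho> idm - inner_on ?I ?\<rho> (tensor_expansion \<Gamma> N G c)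
                 - inner_on ?I ?\<rho> (\<lambda>s t. \<Sum>i<m. S i s * S i t)"
    by (simp only: inner_diff)
  also have "inner_on ?I ?\<rho> idm = 1"
  proof -
    have "inner_on ?I ?\<rho> idm = (\<Sum>s\<in>?I. ?\<rho> s s)"
      unfolding inner_on_def idm_def using finite_tuples by (simp add: if_distrib cong: if_cong)
    then show ?thesis using tr unfolding trace_on_def by simp
  qed
  also have "inner_on ?I ?\<rho> (tensor_expansion \<Gamma> N G c) = 0"
  proof -
    have "inner_on ?I ?\<rho> (tensor_expansion \<Gamma> N G c)
        = (\<Sum>g\<in>gtuples \<Gamma> N. d g * inner_on ?I (tensorG N G g) (tensor_expansion \<Gamma> N G c))"
      unfolding tensor_exp_eta[of \<Gamma> N G d] by (rule inner_sum)
    also have "\<dots> = 0"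
    proof (rule sum.neutral, rule ballI)
      fix g assume g: "g \<in> gtuples \<Gamma> N"
      show "d g * inner_on ?I (tensorG N G g) (tensor_expansion \<Gamma> N G c) = 0"
      proof (cases "all_nonneg g")
        case True
        then have "c g = 0" using c0 by blast
        then have "inner_on ?I (tensorG N G g) (tensor_expansion \<Gamma> N G c) = 0"
          using inner_texp[OF B g, of c] inner_comm[of ?I "tensorG N G g" "tensor_expansion \<Gamma> N G c"] by simp
        then show ?thesis by simp
      next
        case False
        then have "d g = 0" using d0 by blast
        then show ?thesis by simp
      qed
    qed
    finally show ?thesis .
  qed
  also have "inner_on ?I ?\<rho> (\<lambda>s t. \<Sum>i<m. S i s * S i t) \<ge> 0"
  proof -
    have "inner_on ?I ?\<rho> (\<lambda>s t. \<Sum>i<m. S i s * S i t) = (\<Sum>i<m. qform ?I ?\<rho> (S i))"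
      unfolding inner_on_def qform_def
      by (simp add: sum_distrib_left sum_distrib_right mult_ac sum.swap[of _ "{..<m}"])
    also have "\<dots> \<ge> 0"
    proof (rule sum_nonneg)
      fix i show "0 \<le> qform ?I ?\<rho> (S i)" using rho unfolding psd_on_def qform_def by blast
    qed
    finally show ?thesis .
  qed
  ultimately show ?thesis by simp
qed




lemma subseq_conv:
  fixes f :: "nat \<Rightarrow> 'p \<Rightarrow> real"
  assumes "finite P" "\<forall>p\<in>P. \<exists>C. \<forall>n. \<bar>f n p\<bar> \<le> C"
  shows "\<exists>r. strict_mono r \<and> (\<forall>p\<in>P. convergent (\<lambda>n. f (r n) p))"
  using assms
proof (induction P rule: finite_induct)
  case empty
  show ?case by (intro exI[of _ id]) (simp add: strict_mono_def)
next
  case (insert q P)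
  obtain r1 where r1: "strict_mono r1" "\<forall>p\<in>P. convergent (\<lambda>n. f (r1 n) p)"
    using insert by auto
  obtain C where C: "\<forall>n. \<bar>f n q\<bar> \<le> C" using insert.prems by auto
  obtain r2 where r2: "strict_mono r2" "monoseq (\<lambda>n. f (r1 (r2 n)) q)"
    using seq_monosub[of "\<lambda>n. f (r1 n) q"] by blast
  have "Bseq (\<lambda>n. f (r1 (r2 n)) q)" using C by (intro BseqI'[of _ C]) simp
  then have cq: "convergent (\<lambda>n. f (r1 (r2 n)) q)" using r2(2) by (rule Bseq_monoseq_convergent)
  have sm: "strict_mono (\<lambda>n. r1 (r2 n))" using r1(1) r2(1) by (simp add: strict_mono_def)
  have "\<forall>p\<in>P. convergent (\<lambda>n. f ((r1 \<circ> r2) n) p)"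
  proof
    fix p assume "p \<in> P"
    then have "convergent ((\<lambda>n. f (r1 n) p) \<circ> r2)" using r1(2) r2(1) by (intro convergent_subseq_convergent) auto
    then show "convergent (\<lambda>n. f ((r1 \<circ> r2) n) p)" by (simp add: o_def)
  qed
  then show ?case using sm cq by (intro exI[of _ "\<lambda>n. r1 (r2 n)"]) auto
qed

lemma lim_inner:
  assumes "finite I" "\<forall>s\<in>I. \<forall>t\<in>I. (\<lambda>n. X n s t) \<longlonglongrightarrow> Y s t"
  shows "(\<lambda>n. inner_on I (X n) B) \<longlonglongrightarrow> inner_on I Y B"
  unfolding inner_on_def using assms by (intro tendsto_sum tendsto_mult tendsto_const) auto

lemma lim_qform:
  assumes "finite I" "\<forall>s\<in>I. \<forall>t\<in>I. (\<lambda>n. X n s t) \<longlonglongrightarrow> Y s t"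
  shows "(\<lambda>n. qform I (X n) x) \<longlonglongrightarrow> qform I Y x"
  unfolding qform_def using assms by (intro tendsto_sum tendsto_mult tendsto_const) auto

lemma lim_trace:
  assumes "finite I" "\<forall>s\<in>I. \<forall>t\<in>I. (\<lambda>n. X n s t) \<longlonglongrightarrow> Y s t"
  shows "(\<lambda>n. trace_on I (X n)) \<longlonglongrightarrow> trace_on I Y"
  unfolding trace_on_def using assms by (intro tendsto_sum) auto

lemma delta_qform:
  assumes "finite J" "t \<in> J" "msym_on J R"
  shows "qform J R (\<lambda>s. if s = t then 1 else 0) = R t t"
  using qform_shift[OF assms, of "\<lambda>s. 0" 1] unfolding qform_def by simp

lemma psd_entry:
  assumes fin: "finite J" and R: "psd_on J R" and st: "s \<in> J" "t \<in> J"
  shows "(R s t)\<^sup>2 \<le> R s s * R t t" "R s s \<ge> 0"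
proof -
  have sym: "msym_on J R" using R unfolding psd_on_def by blast
  have "(\<Sum>u\<in>J. R s u * (if u = t then 1 else 0))\<^sup>2 \<le> R s s * qform J R (\<lambda>u. if u = t then 1 else 0)"
    by (rule psd_cs(1)[OF fin st(1) R])
  moreover have "(\<Sum>u\<in>J. R s u * (if u = t then 1 else 0)) = R s t"
    using fin st by (simp add: if_distrib cong: if_cong)
  ultimately show "(R s t)\<^sup>2 \<le> R s s * R t t" using delta_qform[OF fin st(2) sym] by simp
  show "R s s \<ge> 0" by (rule psd_cs(3)[OF fin st(1) R])
qed

lemma density_bound:
  assumes fin: "finite J" and R: "psd_on J R" and tr: "trace_on J R = 1" and st: "s \<in> J" "t \<in> J"
  shows "\<bar>R s t\<bar> \<le> 1"
proof -
  have d: "R u u \<le> 1" if "u \<in> J" for u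
  proof -
    have "R u u \<le> (\<Sum>v\<in>J. R v v)"
      using that fin psd_entry(2)[OF fin R] by (intro member_le_sum) auto
    then show ?thesis using tr unfolding trace_on_def by simp
  qed
  have "(R s t)\<^sup>2 \<le> R s s * R t t" by (rule psd_entry(1)[OF fin R st])
  also have "\<dots> \<le> 1 * 1" using d st psd_entry(2)[OF fin R] by (intro mult_mono) auto
  finally have "(R s t)\<^sup>2 \<le> 1" by simp
  then show ?thesis by (simp add: abs_le_square_iff[symmetric] abs_square_le_1)
qed

lemma var_ineq:
  fixes A Bq :: real
  assumes "\<forall>t. 0 < t \<and> t \<le> 1 \<longrightarrow> 0 \<le> 2 * t * A + t\<^sup>2 * Bq" "Bq \<ge> 0"
  shows "A \<ge> 0"
proof (rule ccontr)
  assume "\<not> A \<ge> 0"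
  then have A: "A < 0" by simp
  show False
  proof (cases "Bq = 0")
    case True then show False using assms(1)[rule_format, of 1] A by simp
  next
    case False
    then have Bp: "Bq > 0" using assms(2) by simp
    define t where "t = min 1 (- A / Bq)"
    have t0: "0 < t" "t \<le> 1" using A Bp unfolding t_def by (auto simp: field_simps)
    have "t * Bq \<le> - A" using Bp unfolding t_def by (auto simp: field_simps min_def)
    then have h: "t * (t * Bq) \<le> t * (- A)" using t0 by (intro mult_left_mono) auto
    have "2 * t * A + t\<^sup>2 * Bq \<le> t * A" using h by (simp add: power2_eq_square algebra_simps)
    also have "\<dots> < 0" using t0 A by (simp add: mult_pos_neg)
    finally show False using assms(1) t0 by fastforce
  qed
qed




definition Zm :: "nat \<Rightarrow> (nat \<Rightarrow> nat list \<Rightarrow> real) \<Rightarrow> nat list \<Rightarrow> nat list \<Rightarrow> real" where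
  "Zm D T s t = idm s t - TdagT D T s t"

definition dens :: "'i set \<Rightarrow> ('i \<Rightarrow> 'i \<Rightarrow> real) \<Rightarrow> bool" where
  "dens I \<rho> \<longleftrightarrow> psd_on I \<rho> \<and> trace_on I \<rho> = 1"

lemma psd_cong: "(\<forall>s\<in>I. \<forall>t\<in>I. A s t = B s t) \<Longrightarrow> psd_on I A \<Longrightarrow> psd_on I B"
  unfolding psd_on_def msym_on_def by simp

lemma trace_cong: "(\<forall>s\<in>I. \<forall>t\<in>I. A s t = B s t) \<Longrightarrow> trace_on I A = trace_on I B"
  unfolding trace_on_def by simp

lemma trace_mult_TT:
  "trace_on I (mat_mult_on I X (TdagT D T)) = inner_on I X (TdagT D T)"
  unfolding trace_on_def mat_mult_on_def inner_on_def TdagT_def by (simp add: mult.commute)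

lemma inner_idm: "finite I \<Longrightarrow> inner_on I X idm = trace_on I X"
  unfolding inner_on_def idm_def trace_on_def by (simp add: if_distrib cong: if_cong)

lemma h3_use:
  assumes B: "valid_G_basis M \<Gamma> G"
    and H3: "\<forall>c. (\<forall>g. \<not> all_nonneg g \<longrightarrow> c g = 0) \<longrightarrow>
               psd_on (tuples M N) (tensor_expansion \<Gamma> N G c) \<longrightarrow>
               trace_on (tuples M N) (tensor_expansion \<Gamma> N G c) = 1 \<longrightarrow>
               trace_on (tuples M N)
                 (mat_mult_on (tuples M N) (tensor_expansion \<Gamma> N G c) (TdagT D T)) \<le> 1"
    and \<rho>: "dens (tuples M N) \<rho>"
    and O: "\<forall>g\<in>gtuples \<Gamma> N. \<not> all_nonneg g \<longrightarrow> inner_on (tuples M N) \<rho> (tensorG N G g) = 0"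
  shows "inner_on (tuples M N) \<rho> (Zm D T) \<ge> 0"
proof -
  let ?I = "tuples M N"
  obtain d where d0: "\<forall>g. \<not> all_nonneg g \<longrightarrow> d g = 0"
    and dX: "\<forall>s\<in>?I. \<forall>t\<in>?I. \<rho> s t = tensor_expansion \<Gamma> N G d s t"
    using char_orth[OF B O] by blast
  have "psd_on ?I (tensor_expansion \<Gamma> N G d)" using psd_cong[OF dX] \<rho> unfolding dens_def by blast
  moreover have "trace_on ?I (tensor_expansion \<Gamma> N G d) = 1"
    using trace_cong[OF dX] \<rho> unfolding dens_def by simp
  ultimately have "trace_on ?I (mat_mult_on ?I (tensor_expansion \<Gamma> N G d) (TdagT D T)) \<le> 1"
    using H3 d0 by blast
  then have "inner_on ?I \<rho> (TdagT D T) \<le> 1"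
    unfolding trace_mult_TT using inner_cong[OF dX, of "TdagT D T"] by simp
  moreover have "inner_on ?I \<rho> (Zm D T) = inner_on ?I \<rho> idm - inner_on ?I \<rho> (TdagT D T)"
    unfolding Zm_def by (rule inner_diff)
  moreover have "inner_on ?I \<rho> idm = 1" using inner_idm[OF finite_tuples] \<rho> unfolding dens_def by simp
  ultimately show ?thesis by simp
qed

definition rho0 :: "'i set \<Rightarrow> 'i \<Rightarrow> 'i \<Rightarrow> real" where
  "rho0 I s t = idm s t / real (card I)"

lemma tuples_ne: "M > 0 \<Longrightarrow> replicate N 0 \<in> tuples M N"
  unfolding tuples_def by simp

lemma rho0_dens:
  assumes "finite I" "I \<noteq> {}"
  shows "dens I (rho0 I)"
proof -
  have c: "card I > 0" using assms by (simp add: card_gt_0_iff)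
  have "psd_on I (rho0 I)"
    unfolding psd_on_def
  proof
    show "msym_on I (rho0 I)" unfolding msym_on_def rho0_def idm_def by auto
    show "\<forall>x. 0 \<le> (\<Sum>s\<in>I. \<Sum>t\<in>I. x s * rho0 I s t * x t)"
    proof
      fix x
      have "(\<Sum>s\<in>I. \<Sum>t\<in>I. x s * rho0 I s t * x t) = qform I idm x / real (card I)"
        unfolding qform_def rho0_def by (simp add: sum_divide_distrib)
      also have "\<dots> = (\<Sum>s\<in>I. x s * x s) / real (card I)" using qform_idm[OF assms(1)] by simp
      also have "\<dots> \<ge> 0" by (intro divide_nonneg_nonneg sum_nonneg) auto
      finally show "0 \<le> (\<Sum>s\<in>I. \<Sum>t\<in>I. x s * rho0 I s t * x t)" .
    qed
  qed
  moreover have "trace_on I (rho0 I) = 1" unfolding trace_on_def rho0_def idm_def using c by simp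
  ultimately show ?thesis unfolding dens_def by simp
qed

lemma rho0_orth:
  assumes B: "valid_G_basis M \<Gamma> G" and g: "g \<in> gtuples \<Gamma> N" and nn: "\<not> all_nonneg g"
  shows "inner_on (tuples M N) (rho0 (tuples M N)) (tensorG N G g) = 0"
proof -
  let ?I = "tuples M N"
  obtain k where k: "k < N" "g!k < 0" using not_nonneg_nth[OF g nn] by blast
  have gk: "g!k \<in> \<Gamma>" by (rule gtuples_nth[OF g k(1)])
  have "mtr M (G (g!k)) (G 0) = 0"
    using B gk k(2) unfolding valid_G_basis_def by (metis less_irrefl)
  moreover have "mtr M (G (g!k)) (G 0) = (\<Sum>i<M. G (g!k) i i)"
  proof -
    have "mtr M (G (g!k)) (G 0) = (\<Sum>i<M. \<Sum>j<M. G (g!k) i j * (if i = j then 1 else 0))"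
      unfolding mtr_def using B unfolding valid_G_basis_def by (intro sum.cong refl) auto
    also have "\<dots> = (\<Sum>i<M. G (g!k) i i)" by (simp add: if_distrib cong: if_cong)
    finally show ?thesis .
  qed
  ultimately have z: "(\<Sum>i<M. G (g!k) i i) = 0" by simp
  have "inner_on ?I (rho0 ?I) (tensorG N G g) = inner_on ?I idm (tensorG N G g) / real (card ?I)"
    unfolding inner_on_def rho0_def by (simp add: sum_divide_distrib)
  also have "inner_on ?I idm (tensorG N G g) = trace_on ?I (tensorG N G g)"
    using inner_idm[OF finite_tuples] inner_comm by metis
  also have "trace_on ?I (tensorG N G g) = (\<Prod>k<N. \<Sum>i<M. G (g!k) i i)"
    unfolding trace_on_def tensorG_def by (rule prod_sum_tuples)
  also have "\<dots> = 0" using k(1) z by (intro prod_zero) auto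
  finally show ?thesis by simp
qed




lemma lim_psd:
  assumes fin: "finite I" and L: "\<forall>s\<in>I. \<forall>t\<in>I. (\<lambda>n. X n s t) \<longlonglongrightarrow> Y s t"
    and P: "\<And>n. psd_on I (X n)"
  shows "psd_on I Y"
  unfolding psd_on_def
proof
  show "msym_on I Y" unfolding msym_on_def
  proof (intro ballI)
    fix s t assume st: "s \<in> I" "t \<in> I"
    have "(\<lambda>n. X n s t) = (\<lambda>n. X n t s)" using P st unfolding psd_on_def msym_on_def by auto
    then show "Y s t = Y t s" using L st by (metis LIMSEQ_unique)
  qed
  show "\<forall>x. 0 \<le> (\<Sum>s\<in>I. \<Sum>t\<in>I. x s * Y s t * x t)"
  proof
    fix x
    have "(\<lambda>n. qform I (X n) x) \<longlonglongrightarrow> qform I Y x" by (rule lim_qform[OF fin L])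
    moreover have "\<forall>n. 0 \<le> qform I (X n) x" using P unfolding psd_on_def qform_def by blast
    ultimately have "0 \<le> qform I Y x" by (intro LIMSEQ_le_const) auto
    then show "0 \<le> (\<Sum>s\<in>I. \<Sum>t\<in>I. x s * Y s t * x t)" unfolding qform_def .
  qed
qed

definition Fobj :: "'i set \<Rightarrow> 'k set \<Rightarrow> ('k \<Rightarrow> 'i \<Rightarrow> 'i \<Rightarrow> real) \<Rightarrow> ('i \<Rightarrow> 'i \<Rightarrow> real) \<Rightarrow> real \<Rightarrow> ('i \<Rightarrow> 'i \<Rightarrow> real) \<Rightarrow> real" where
  "Fobj I K Bm Z \<epsilon> \<rho> = (\<Sum>k\<in>K. (inner_on I \<rho> (Bm k))\<^sup>2) + (inner_on I \<rho> Z + \<epsilon>)\<^sup>2"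

lemma min_exists:
  assumes fin: "finite I" and finK: "finite K" and ne: "\<exists>\<rho>. dens I \<rho>"
  shows "\<exists>\<rho>s. dens I \<rho>s \<and> (\<forall>\<rho>. dens I \<rho> \<longrightarrow> Fobj I K Bm Z \<epsilon> \<rho>s \<le> Fobj I K Bm Z \<epsilon> \<rho>)"
proof -
  let ?F = "Fobj I K Bm Z \<epsilon>"
  let ?S = "?F ` {\<rho>. dens I \<rho>}"
  define J where "J = Inf ?S"
  have Sne: "?S \<noteq> {}" using ne by auto
  have bdd: "bdd_below ?S" unfolding Fobj_def by (intro bdd_belowI[of _ 0]) (auto intro!: sum_nonneg add_nonneg_nonneg)
  have "\<forall>n. \<exists>\<rho>. dens I \<rho> \<and> ?F \<rho> < J + inverse (real (Suc n))"
  proof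
    fix n
    have "Inf ?S < J + inverse (real (Suc n))" unfolding J_def by simp
    then show "\<exists>\<rho>. dens I \<rho> \<and> ?F \<rho> < J + inverse (real (Suc n))"
      using cInf_less_iff[OF Sne bdd] by auto
  qed
  then obtain \<rho>q where \<rho>q: "\<And>n. dens I (\<rho>q n)" "\<And>n. ?F (\<rho>q n) < J + inverse (real (Suc n))"
    by metis
  have bnd: "\<forall>p\<in>I \<times> I. \<exists>C. \<forall>n. \<bar>(\<lambda>n (s,t). \<rho>q n s t) n p\<bar> \<le> C"
  proof
    fix p assume "p \<in> I \<times> I"
    then show "\<exists>C. \<forall>n. \<bar>(\<lambda>n (s,t). \<rho>q n s t) n p\<bar> \<le> C"
      using density_bound[OF fin] \<rho>q(1) unfolding dens_def by (intro exI[of _ 1]) auto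
  qed
  obtain r where r: "strict_mono r" "\<forall>p\<in>I \<times> I. convergent (\<lambda>n. (\<lambda>n (s,t). \<rho>q n s t) (r n) p)"
    using subseq_conv[OF _ bnd] fin by blast
  define \<rho>l where "\<rho>l s t = lim (\<lambda>n. \<rho>q (r n) s t)" for s t
  have L: "\<forall>s\<in>I. \<forall>t\<in>I. (\<lambda>n. \<rho>q (r n) s t) \<longlonglongrightarrow> \<rho>l s t"
  proof (intro ballI)
    fix s t assume "s \<in> I" "t \<in> I"
    then have "convergent (\<lambda>n. \<rho>q (r n) s t)" using r(2) by fastforce
    then show "(\<lambda>n. \<rho>q (r n) s t) \<longlonglongrightarrow> \<rho>l s t" unfolding \<rho>l_def by (simp add: convergent_LIMSEQ_iff)
  qed
  have dl: "dens I \<rho>l"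
  proof -
    have "psd_on I \<rho>l" by (rule lim_psd[OF fin L]) (use \<rho>q(1) in \<open>simp add: dens_def\<close>)
    moreover have "(\<lambda>n. trace_on I (\<rho>q (r n))) \<longlonglongrightarrow> trace_on I \<rho>l" by (rule lim_trace[OF fin L])
    then have "trace_on I \<rho>l = 1" using \<rho>q(1) unfolding dens_def by (simp add: LIMSEQ_const_iff)
    ultimately show ?thesis unfolding dens_def by simp
  qed
  have FL: "(\<lambda>n. ?F (\<rho>q (r n))) \<longlonglongrightarrow> ?F \<rho>l"
    unfolding Fobj_def
    by (intro tendsto_add tendsto_sum tendsto_power lim_inner[OF fin L] tendsto_const)
  have up: "(\<lambda>n. J + inverse (real (Suc n))) \<longlonglongrightarrow> J"
    using tendsto_add[OF tendsto_const LIMSEQ_inverse_real_of_nat, of J] by simp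
  have "\<forall>n. ?F (\<rho>q (r n)) \<le> J + inverse (real (Suc n))"
  proof
    fix n
    have "n \<le> r n" using seq_suble[OF r(1)] by simp
    then have a: "inverse (real (Suc (r n))) \<le> inverse (real (Suc n))" by (intro le_imp_inverse_le) auto
    have b: "?F (\<rho>q (r n)) < J + inverse (real (Suc (r n)))" by (rule \<rho>q(2))
    show "?F (\<rho>q (r n)) \<le> J + inverse (real (Suc n))" using a b by linarith
  qed
  then have "?F \<rho>l \<le> J" using FL up by (intro LIMSEQ_le) auto
  moreover have "J \<le> ?F \<rho>" if "dens I \<rho>" for \<rho>
    unfolding J_def using that bdd by (intro cInf_lower) auto
  ultimately show ?thesis using dl by force
qed




lemma inner_affine:
  "inner_on I (\<lambda>s u. A s u + t * (B s u - A s u)) C = inner_on I A C + t * (inner_on I B C - inner_on I A C)"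
  unfolding inner_on_def
  by (simp add: algebra_simps sum.distrib sum_subtractf sum_distrib_left)

lemma qform_affine:
  "qform I (\<lambda>s u. A s u + t * (B s u - A s u)) x = qform I A x + t * (qform I B x - qform I A x)"
  unfolding qform_def
  by (simp add: algebra_simps sum.distrib sum_subtractf sum_distrib_left)

lemma sum_sq_shift:
  fixes a b :: "'k \<Rightarrow> real"
  shows "(\<Sum>k\<in>K. (a k + t * b k)\<^sup>2) = (\<Sum>k\<in>K. (a k)\<^sup>2) + 2 * t * (\<Sum>k\<in>K. a k * b k) + t\<^sup>2 * (\<Sum>k\<in>K. (b k)\<^sup>2)"
proof -
  have "\<And>k. (a k + t * b k)\<^sup>2 = (a k)\<^sup>2 + 2 * t * (a k * b k) + t\<^sup>2 * (b k)\<^sup>2"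
    by (simp add: power2_eq_square algebra_simps)
  then show ?thesis by (simp add: sum.distrib sum_distrib_left)
qed


lemma variational:
  assumes fin: "finite I" and ds: "dens I \<rho>s"
    and min: "\<forall>\<rho>. dens I \<rho> \<longrightarrow> Fobj I K Bm Z \<epsilon> \<rho>s \<le> Fobj I K Bm Z \<epsilon> \<rho>"
    and d: "dens I \<rho>"
  shows "(\<Sum>k\<in>K. inner_on I \<rho>s (Bm k) * inner_on I \<rho> (Bm k)) + (inner_on I \<rho>s Z + \<epsilon>) * (inner_on I \<rho> Z + \<epsilon>)
         \<ge> Fobj I K Bm Z \<epsilon> \<rho>s"
proof -
  define a where "a k = inner_on I \<rho>s (Bm k)" for k
  define b where "b k = inner_on I \<rho> (Bm k) - a k" for k
  define a0 where "a0 = inner_on I \<rho>s Z + \<epsilon>"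
  define b0 where "b0 = inner_on I \<rho> Z - inner_on I \<rho>s Z"
  define \<rho>t where "\<rho>t t = (\<lambda>s u. \<rho>s s u + t * (\<rho> s u - \<rho>s s u))" for t :: real
  have dt: "dens I (\<rho>t t)" if t: "0 \<le> t" "t \<le> 1" for t
  proof -
    have "psd_on I (\<rho>t t)"
      unfolding psd_on_def
    proof
      show "msym_on I (\<rho>t t)" using ds d unfolding dens_def psd_on_def msym_on_def \<rho>t_def by simp
      show "\<forall>x. 0 \<le> (\<Sum>s\<in>I. \<Sum>u\<in>I. x s * \<rho>t t s u * x u)"
      proof
        fix x
        have q1: "qform I \<rho>s x \<ge> 0" "qform I \<rho> x \<ge> 0"
          using ds d unfolding dens_def psd_on_def qform_def by blast+
        have "qform I (\<rho>t t) x = (1 - t) * qform I \<rho>s x + t * qform I \<rho> x"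
          unfolding \<rho>t_def qform_affine by (simp add: algebra_simps)
        also have "\<dots> \<ge> 0" using q1 t by (intro add_nonneg_nonneg mult_nonneg_nonneg) auto
        finally show "0 \<le> (\<Sum>s\<in>I. \<Sum>u\<in>I. x s * \<rho>t t s u * x u)" unfolding qform_def .
      qed
    qed
    moreover have "trace_on I (\<rho>t t) = 1"
      using ds d unfolding dens_def trace_on_def \<rho>t_def
      by (simp add: sum.distrib sum_subtractf sum_distrib_left[symmetric])
    ultimately show ?thesis unfolding dens_def by simp
  qed
  have Ft: "Fobj I K Bm Z \<epsilon> (\<rho>t t) = (\<Sum>k\<in>K. (a k + t * b k)\<^sup>2) + (a0 + t * b0)\<^sup>2" for t
    unfolding Fobj_def \<rho>t_def inner_affine a_def b_def a0_def b0_def by (simp add: algebra_simps)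
  have F0: "Fobj I K Bm Z \<epsilon> \<rho>s = (\<Sum>k\<in>K. (a k)\<^sup>2) + a0\<^sup>2"
    unfolding Fobj_def a_def a0_def by simp
  have "\<forall>t. 0 < t \<and> t \<le> 1 \<longrightarrow> 0 \<le> 2 * t * ((\<Sum>k\<in>K. a k * b k) + a0 * b0) + t\<^sup>2 * ((\<Sum>k\<in>K. (b k)\<^sup>2) + b0\<^sup>2)"
  proof (intro allI impI)
    fix t :: real assume t: "0 < t \<and> t \<le> 1"
    have "Fobj I K Bm Z \<epsilon> \<rho>s \<le> Fobj I K Bm Z \<epsilon> (\<rho>t t)" using min dt t by auto
    then have "(\<Sum>k\<in>K. (a k)\<^sup>2) + a0\<^sup>2 \<le> (\<Sum>k\<in>K. (a k + t * b k)\<^sup>2) + (a0 + t * b0)\<^sup>2"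
      unfolding Ft F0 .
    then show "0 \<le> 2 * t * ((\<Sum>k\<in>K. a k * b k) + a0 * b0) + t\<^sup>2 * ((\<Sum>k\<in>K. (b k)\<^sup>2) + b0\<^sup>2)"
      unfolding sum_sq_shift by (simp add: power2_eq_square algebra_simps)
  qed
  then have v: "(\<Sum>k\<in>K. a k * b k) + a0 * b0 \<ge> 0"
    by (rule var_ineq) (intro add_nonneg_nonneg sum_nonneg; simp)
  have "(\<Sum>k\<in>K. inner_on I \<rho>s (Bm k) * inner_on I \<rho> (Bm k)) + (inner_on I \<rho>s Z + \<epsilon>) * (inner_on I \<rho> Z + \<epsilon>)
      = (\<Sum>k\<in>K. a k * (a k + b k)) + a0 * (a0 + b0)"
    unfolding a_def b_def a0_def b0_def by simp
  also have "\<dots> = Fobj I K Bm Z \<epsilon> \<rho>s + ((\<Sum>k\<in>K. a k * b k) + a0 * b0)"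
    unfolding F0 by (simp add: distrib_left sum.distrib power2_eq_square)
  finally show ?thesis using v by simp
qed




lemma qform_transp: "qform I (\<lambda>s t. A t s) x = qform I A x"
  unfolding qform_def by (subst sum.swap) (simp add: mult_ac)

lemma inner_transp: "inner_on I (\<lambda>s t. A t s) C = inner_on I A (\<lambda>s t. C t s)"
  unfolding inner_on_def by (subst sum.swap) simp

lemma qform_zero: "(\<forall>s\<in>I. x s = 0) \<Longrightarrow> qform I A x = 0"
  unfolding qform_def by simp

lemma tensorG_sym:
  assumes B: "valid_G_basis M \<Gamma> G" and h: "h \<in> gtuples \<Gamma> N" "all_nonneg h"
    and st: "s \<in> tuples M N" "t \<in> tuples M N"
  shows "tensorG N G h t s = tensorG N G h s t"
  unfolding tensorG_def
proof (rule prod.cong[OF refl])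
  fix k assume k: "k \<in> {..<N}"
  then have "s!k < M" "t!k < M" using st unfolding tuples_def by auto
  moreover have "\<forall>i<M. \<forall>j<M. G (h!k) i j = G (h!k) j i"
    apply (rule basis_sym[OF B gtuples_nth[OF h(1)]])
    using k apply simp
    using h k unfolding all_nonneg_def gtuples_def by auto
  ultimately show "G (h!k) (t!k) (s!k) = G (h!k) (s!k) (t!k)" by blast
qed

lemma rank1_dens:
  assumes fin: "finite I" and S2: "(\<Sum>s\<in>I. x s * x s) > 0"
  shows "dens I (\<lambda>s t. x s * x t / (\<Sum>s\<in>I. x s * x s))"
    and "inner_on I (\<lambda>s t. x s * x t / (\<Sum>s\<in>I. x s * x s)) A = qform I A x / (\<Sum>s\<in>I. x s * x s)"
proof -
  let ?S = "\<Sum>s\<in>I. x s * x s"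
  show "inner_on I (\<lambda>s t. x s * x t / ?S) A = qform I A x / ?S"
    unfolding inner_on_def qform_def by (simp add: sum_divide_distrib mult_ac)
  have "psd_on I (\<lambda>s t. x s * x t / ?S)"
    unfolding psd_on_def
  proof
    show "msym_on I (\<lambda>s t. x s * x t / ?S)" unfolding msym_on_def by (simp add: mult.commute)
    show "\<forall>y. 0 \<le> (\<Sum>s\<in>I. \<Sum>t\<in>I. y s * (x s * x t / ?S) * y t)"
    proof
      fix y
      have "(\<Sum>s\<in>I. \<Sum>t\<in>I. y s * (x s * x t / ?S) * y t) = (\<Sum>s\<in>I. y s * x s)\<^sup>2 / ?S"
        by (simp add: power2_eq_square sum_product sum_divide_distrib mult_ac)
      also have "\<dots> \<ge> 0" using S2 by simp
      finally show "0 \<le> (\<Sum>s\<in>I. \<Sum>t\<in>I. y s * (x s * x t / ?S) * y t)" .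
    qed
  qed
  moreover have "trace_on I (\<lambda>s t. x s * x t / ?S) = 1"
    unfolding trace_on_def using S2 by (simp add: sum_divide_distrib[symmetric])
  ultimately show "dens I (\<lambda>s t. x s * x t / ?S)" unfolding dens_def by simp
qed




lemma inner_scalesum:
  "inner_on I (\<lambda>s t. k * (A s t + B s t)) C = k * (inner_on I A C + inner_on I B C)"
  unfolding inner_on_def by (simp add: sum_distrib_left distrib_left distrib_right sum.distrib mult.assoc)

lemma qform_scalesum:
  "qform I (\<lambda>s t. k * (A s t + B s t)) x = k * (qform I A x + qform I B x)"
  unfolding qform_def by (simp add: sum_distrib_left distrib_left distrib_right sum.distrib mult_ac)

lemma Zm_sym: "Zm D T s t = Zm D T t s"
  unfolding Zm_def idm_def TdagT_def by (auto simp: mult.commute)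

lemma qform_add_scale: "qform I (\<lambda>s t. A s t + k * B s t) x = qform I A x + k * qform I B x"
  unfolding qform_def by (simp add: sum.distrib sum_distrib_left distrib_left distrib_right mult_ac)

lemma eps_step:
  assumes B: "valid_G_basis M \<Gamma> G"
    and H3: "\<forall>c. (\<forall>g. \<not> all_nonneg g \<longrightarrow> c g = 0) \<longrightarrow>
               psd_on (tuples M N) (tensor_expansion \<Gamma> N G c) \<longrightarrow>
               trace_on (tuples M N) (tensor_expansion \<Gamma> N G c) = 1 \<longrightarrow>
               trace_on (tuples M N)
                 (mat_mult_on (tuples M N) (tensor_expansion \<Gamma> N G c) (TdagT D T)) \<le> 1"
    and eps: "\<epsilon> > 0"
  shows "\<exists>Q. msym_on (tuples M N) Q \<and>
             (\<forall>h\<in>gtuples \<Gamma> N. all_nonneg h \<longrightarrow> inner_on (tuples M N) Q (tensorG N G h) = 0) \<and>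
             psd_on (tuples M N) (\<lambda>s t. Zm D T s t + \<epsilon> * idm s t - Q s t)"
proof -
  let ?I = "tuples M N"
  let ?K = "{g\<in>gtuples \<Gamma> N. \<not> all_nonneg g}"
  let ?Bm = "\<lambda>g. tensorG N G g"
  let ?Z = "Zm D T"
  let ?F = "Fobj ?I ?K ?Bm ?Z \<epsilon>"
  have fin: "finite ?I" by (rule finite_tuples)
  have finK: "finite ?K" using finite_gtuples[OF B] by simp
  have Ine: "?I \<noteq> {}" using tuples_ne[OF basis_M_pos[OF B]] by blast
  have d0: "dens ?I (rho0 ?I)" by (rule rho0_dens[OF fin Ine])
  have o0: "\<forall>g\<in>gtuples \<Gamma> N. \<not> all_nonneg g \<longrightarrow> inner_on ?I (rho0 ?I) (tensorG N G g) = 0"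
    using rho0_orth[OF B] by blast
  have z0: "inner_on ?I (rho0 ?I) ?Z \<ge> 0" by (rule h3_use[OF B H3 d0 o0])
  obtain \<rho>s where ds: "dens ?I \<rho>s" and min: "\<forall>\<rho>. dens ?I \<rho> \<longrightarrow> ?F \<rho>s \<le> ?F \<rho>"
    using min_exists[OF fin finK] d0 by blast
  define a where "a g = inner_on ?I \<rho>s (tensorG N G g)" for g
  define a0 where "a0 = inner_on ?I \<rho>s ?Z + \<epsilon>"
  have Fpos: "?F \<rho>s > 0"
  proof (rule ccontr)
    assume "\<not> ?F \<rho>s > 0"
    moreover have s1: "(\<Sum>g\<in>?K. (inner_on ?I \<rho>s (tensorG N G g))\<^sup>2) \<ge> 0" by (intro sum_nonneg) simp
    moreover have s2: "(inner_on ?I \<rho>s ?Z + \<epsilon>)\<^sup>2 \<ge> 0" by simp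
    ultimately have e1: "(\<Sum>g\<in>?K. (inner_on ?I \<rho>s (tensorG N G g))\<^sup>2) = 0"
      and e2: "(inner_on ?I \<rho>s ?Z + \<epsilon>)\<^sup>2 = 0" unfolding Fobj_def by linarith+
    have "\<forall>g\<in>?K. (inner_on ?I \<rho>s (tensorG N G g))\<^sup>2 = 0"
      using e1 finK by (subst (asm) sum_nonneg_eq_0_iff) auto
    then have "\<forall>g\<in>gtuples \<Gamma> N. \<not> all_nonneg g \<longrightarrow> inner_on ?I \<rho>s (tensorG N G g) = 0" by simp
    then have "inner_on ?I \<rho>s ?Z \<ge> 0" by (rule h3_use[OF B H3 ds])
    then show False using e2 eps by simp
  qed
  have key: "(\<Sum>g\<in>?K. a g * inner_on ?I \<rho> (tensorG N G g)) + a0 * (inner_on ?I \<rho> ?Z + \<epsilon>) > 0"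
    if "dens ?I \<rho>" for \<rho>
    using variational[OF fin ds min that] Fpos unfolding a_def a0_def by simp
  have a0pos: "a0 > 0"
  proof -
    have "(\<Sum>g\<in>?K. a g * inner_on ?I (rho0 ?I) (tensorG N G g)) = 0"
      using o0 by (intro sum.neutral) auto
    then have "a0 * (inner_on ?I (rho0 ?I) ?Z + \<epsilon>) > 0" using key[OF d0] by simp
    moreover have "inner_on ?I (rho0 ?I) ?Z + \<epsilon> > 0" using z0 eps by simp
    ultimately show ?thesis by (simp add: zero_less_mult_iff)
  qed
  define Q0 where "Q0 s t = (\<Sum>g\<in>?K. a g * tensorG N G g s t)" for s t
  define Q where "Q s t = (- 1 / (2 * a0)) * (Q0 s t + Q0 t s)" for s t
  have msym: "msym_on ?I Q" unfolding msym_on_def Q_def by (simp add: add.commute)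
  have orth: "\<forall>h\<in>gtuples \<Gamma> N. all_nonneg h \<longrightarrow> inner_on ?I Q (tensorG N G h) = 0"
  proof (intro ballI impI)
    fix h assume h: "h \<in> gtuples \<Gamma> N" "all_nonneg h"
    have i0: "inner_on ?I Q0 (tensorG N G h) = 0"
    proof -
      have "inner_on ?I Q0 (tensorG N G h) = (\<Sum>g\<in>?K. a g * inner_on ?I (tensorG N G g) (tensorG N G h))"
        unfolding Q0_def by (rule inner_sum)
      also have "\<dots> = 0"
      proof (rule sum.neutral, rule ballI)
        fix g assume "g \<in> ?K"
        then have "g \<in> gtuples \<Gamma> N" "g \<noteq> h" using h by auto
        then show "a g * inner_on ?I (tensorG N G g) (tensorG N G h) = 0"
          using orth_tensorG[OF B _ h(1)] by simp
      qed
      finally show ?thesis .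
    qed
    have i1: "inner_on ?I (\<lambda>s t. Q0 t s) (tensorG N G h) = 0"
    proof -
      have "inner_on ?I (\<lambda>s t. Q0 t s) (tensorG N G h) = inner_on ?I Q0 (\<lambda>s t. tensorG N G h t s)"
        by (rule inner_transp)
      also have "\<dots> = inner_on ?I Q0 (tensorG N G h)"
        unfolding inner_on_def
      proof (intro sum.cong refl)
        fix s t assume "s \<in> ?I" "t \<in> ?I"
        then have "tensorG N G h t s = tensorG N G h s t" by (rule tensorG_sym[OF B h])
        then show "Q0 s t * tensorG N G h t s = Q0 s t * tensorG N G h s t" by simp
      qed
      finally show ?thesis using i0 by simp
    qed
    have "inner_on ?I Q (tensorG N G h) = (- 1 / (2 * a0)) * (inner_on ?I Q0 (tensorG N G h) + inner_on ?I (\<lambda>s t. Q0 t s) (tensorG N G h))"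
      unfolding Q_def by (rule inner_scalesum)
    then show "inner_on ?I Q (tensorG N G h) = 0" using i0 i1 by simp
  qed
  have psd: "psd_on ?I (\<lambda>s t. ?Z s t + \<epsilon> * idm s t - Q s t)"
    unfolding psd_on_def
  proof
    show "msym_on ?I (\<lambda>s t. ?Z s t + \<epsilon> * idm s t - Q s t)"
      unfolding msym_on_def
    proof (intro ballI)
      fix s t assume st: "s \<in> ?I" "t \<in> ?I"
      have "Q s t = Q t s" using msym st unfolding msym_on_def by blast
      moreover have "?Z s t = ?Z t s" by (rule Zm_sym)
      moreover have "idm s t = idm t s" unfolding idm_def by auto
      ultimately show "?Z s t + \<epsilon> * idm s t - Q s t = ?Z t s + \<epsilon> * idm t s - Q t s" by simp
    qed
    show "\<forall>x. 0 \<le> (\<Sum>s\<in>?I. \<Sum>t\<in>?I. x s * (?Z s t + \<epsilon> * idm s t - Q s t) * x t)"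
    proof
      fix x :: "nat list \<Rightarrow> real"
      let ?S2 = "\<Sum>s\<in>?I. x s * x s"
      have qQ0: "qform ?I Q0 x = (\<Sum>g\<in>?K. a g * qform ?I (tensorG N G g) x)"
        unfolding Q0_def by (rule qform_sum)
      have qQ: "qform ?I Q x = - qform ?I Q0 x / a0"
      proof -
        have "qform ?I Q x = (- 1 / (2 * a0)) * (qform ?I Q0 x + qform ?I (\<lambda>s t. Q0 t s) x)"
          unfolding Q_def by (rule qform_scalesum)
        moreover have "qform ?I (\<lambda>s t. Q0 t s) x = qform ?I Q0 x" by (rule qform_transp)
        ultimately show ?thesis using a0pos by simp
      qed
      have qW: "qform ?I (\<lambda>s t. ?Z s t + \<epsilon> * idm s t - Q s t) x = qform ?I ?Z x + \<epsilon> * ?S2 - qform ?I Q x"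
        using qform_diff[of ?I "\<lambda>s t. ?Z s t + \<epsilon> * idm s t" Q x] qform_add_scale[of ?I ?Z \<epsilon> idm x]
          qform_idm[OF fin, of x] by simp
      have "qform ?I (\<lambda>s t. ?Z s t + \<epsilon> * idm s t - Q s t) x \<ge> 0"
      proof (cases "?S2 > 0")
        case False
        then have "?S2 = 0" using sum_nonneg[of ?I "\<lambda>s. x s * x s"] by (simp add: not_less)
        then have "\<forall>s\<in>?I. x s * x s = 0" using fin by (subst (asm) sum_nonneg_eq_0_iff) auto
        then have "\<forall>s\<in>?I. x s = 0" by simp
        then show ?thesis by (simp add: qform_zero)
      next
        case True
        let ?\<rho> = "\<lambda>s t. x s * x t / ?S2"
        have k: "(\<Sum>g\<in>?K. a g * inner_on ?I ?\<rho> (tensorG N G g)) + a0 * (inner_on ?I ?\<rho> ?Z + \<epsilon>) > 0"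
          by (rule key[OF rank1_dens(1)[OF fin True]])
        then have "(\<Sum>g\<in>?K. a g * (qform ?I (tensorG N G g) x / ?S2)) + a0 * (qform ?I ?Z x / ?S2 + \<epsilon>) > 0"
          unfolding rank1_dens(2)[OF fin True] .
        then have "qform ?I Q0 x / ?S2 + a0 * (qform ?I ?Z x / ?S2 + \<epsilon>) > 0"
          unfolding qQ0 by (simp add: sum_divide_distrib[symmetric])
        then have "(qform ?I Q0 x + a0 * (qform ?I ?Z x + \<epsilon> * ?S2)) / ?S2 > 0"
          using True by (simp add: field_simps)
        then have "qform ?I Q0 x + a0 * (qform ?I ?Z x + \<epsilon> * ?S2) > 0"
          using True by (simp add: zero_less_divide_iff)
        then have "qform ?I Q0 x / a0 + (qform ?I ?Z x + \<epsilon> * ?S2) > 0"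
          using a0pos by (simp add: field_simps)
        then show ?thesis unfolding qW qQ by simp
      qed
      then show "0 \<le> (\<Sum>s\<in>?I. \<Sum>t\<in>?I. x s * (?Z s t + \<epsilon> * idm s t - Q s t) * x t)"
        unfolding qform_def .
    qed
  qed
  show ?thesis using msym orth psd by blast
qed




lemma Qbound:
  fixes Z Q A :: "'i \<Rightarrow> 'i \<Rightarrow> real"
  assumes fin: "finite I" and st: "s \<in> I" "t \<in> I" and trQ: "trace_on I Q = 0"
    and A: "psd_on I A" and Aeq: "\<forall>s\<in>I. \<forall>t\<in>I. A s t = Z s t + e * idm s t - Q s t"
    and e: "0 \<le> e" "e \<le> 1"
  shows "\<bar>Q s t\<bar> \<le> \<bar>Z s t\<bar> + 1 + 2 * (\<Sum>u\<in>I. \<bar>Z u u\<bar> + 1)"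
proof -
  define W where "W = (\<Sum>u\<in>I. \<bar>Z u u\<bar> + 1)"
  have Wu: "\<bar>Z u u\<bar> + 1 \<le> W" if "u \<in> I" for u
    unfolding W_def using fin that by (intro member_le_sum) auto
  have Aii: "A u u = Z u u + e - Q u u" if "u \<in> I" for u using Aeq that unfolding idm_def by simp
  have Qup: "Q u u \<le> \<bar>Z u u\<bar> + 1" if u: "u \<in> I" for u
    using psd_entry(2)[OF fin A u u] Aii[OF u] e by linarith
  have Qlow: "Q u u \<ge> - W" if u: "u \<in> I" for u
  proof -
    have "0 = Q u u + (\<Sum>v\<in>I - {u}. Q v v)" using trQ sum.remove[OF fin u, of "\<lambda>v. Q v v"]
      unfolding trace_on_def by simp
    moreover have "(\<Sum>v\<in>I - {u}. Q v v) \<le> (\<Sum>v\<in>I - {u}. \<bar>Z v v\<bar> + 1)"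
      using Qup by (intro sum_mono) auto
    moreover have "(\<Sum>v\<in>I - {u}. \<bar>Z v v\<bar> + 1) \<le> W"
      unfolding W_def using fin by (intro sum_mono2) auto
    ultimately show ?thesis by linarith
  qed
  have Aup: "A u u \<le> 2 * W" "A u u \<ge> 0" if u: "u \<in> I" for u
    using Aii[OF u] Qlow[OF u] Wu[OF u] e psd_entry(2)[OF fin A u u] by linarith+
  have W0: "W \<ge> 0" unfolding W_def by (intro sum_nonneg) simp
  have "(A s t)\<^sup>2 \<le> A s s * A t t" by (rule psd_entry(1)[OF fin A st])
  also have "\<dots> \<le> (2 * W) * (2 * W)" using Aup[OF st(1)] Aup[OF st(2)] by (intro mult_mono) auto
  finally have "(A s t)\<^sup>2 \<le> (2 * W)\<^sup>2" by (simp add: power2_eq_square)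
  then have Ast: "\<bar>A s t\<bar> \<le> 2 * W" using W0 power2_le_iff_abs_le[of "2 * W" "A s t"] by linarith
  have "\<bar>e * idm s t\<bar> \<le> 1" using e unfolding idm_def by auto
  moreover have "Q s t = Z s t + e * idm s t - A s t" using Aeq st by simp
  ultimately show ?thesis using Ast unfolding W_def[symmetric] by linarith
qed


lemma tensorG_zero:
  assumes B: "valid_G_basis M \<Gamma> G" and st: "s \<in> tuples M N" "t \<in> tuples M N"
  shows "tensorG N G (replicate N 0) s t = idm s t"
proof -
  have "tensorG N G (replicate N 0) s t = (\<Prod>k<N. if s!k = t!k then 1 else 0 :: real)"
    unfolding tensorG_def
  proof (rule prod.cong[OF refl])
    fix k assume "k \<in> {..<N}"
    then have "s!k < M" "t!k < M" using st unfolding tuples_def by auto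
    then show "G (replicate N 0 ! k) (s!k) (t!k) = (if s!k = t!k then 1 else 0)"
      using B \<open>k \<in> {..<N}\<close> unfolding valid_G_basis_def by simp
  qed
  also have "\<dots> = idm s t" unfolding idm_def by (rule tuples_eq_iff[OF st])
  finally show ?thesis .
qed

lemma three_two:
  assumes B: "valid_G_basis M \<Gamma> G"
    and H3: "\<forall>c. (\<forall>g. \<not> all_nonneg g \<longrightarrow> c g = 0) \<longrightarrow>
               psd_on (tuples M N) (tensor_expansion \<Gamma> N G c) \<longrightarrow>
               trace_on (tuples M N) (tensor_expansion \<Gamma> N G c) = 1 \<longrightarrow>
               trace_on (tuples M N)
                 (mat_mult_on (tuples M N) (tensor_expansion \<Gamma> N G c) (TdagT D T)) \<le> 1"
  shows "\<exists>c. (\<forall>g. all_nonneg g \<longrightarrow> c g = 0) \<and>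
                msym_on (tuples M N) (tensor_expansion \<Gamma> N G c) \<and>
                psd_on (tuples M N)
                  (\<lambda>s t. idm s t - TdagT D T s t - tensor_expansion \<Gamma> N G c s t)"
proof -
  let ?I = "tuples M N"
  let ?Z = "Zm D T"
  have fin: "finite ?I" by (rule finite_tuples)
  define e where "e n = inverse (real (Suc n))" for n
  have e0: "0 < e n" "e n \<le> 1" for n unfolding e_def by (auto simp: field_simps)
  have "\<forall>n. \<exists>Q. msym_on ?I Q \<and>
             (\<forall>h\<in>gtuples \<Gamma> N. all_nonneg h \<longrightarrow> inner_on ?I Q (tensorG N G h) = 0) \<and>
             psd_on ?I (\<lambda>s t. ?Z s t + e n * idm s t - Q s t)"
    using eps_step[OF B H3] e0 by blast
  then have "\<exists>Qs. \<forall>n. msym_on ?I (Qs n) \<and>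
             (\<forall>h\<in>gtuples \<Gamma> N. all_nonneg h \<longrightarrow> inner_on ?I (Qs n) (tensorG N G h) = 0) \<and>
             psd_on ?I (\<lambda>s t. ?Z s t + e n * idm s t - Qs n s t)"
    by (rule choice)
  then obtain Qs where Qs: "\<forall>n. msym_on ?I (Qs n) \<and>
             (\<forall>h\<in>gtuples \<Gamma> N. all_nonneg h \<longrightarrow> inner_on ?I (Qs n) (tensorG N G h) = 0) \<and>
             psd_on ?I (\<lambda>s t. ?Z s t + e n * idm s t - Qs n s t)" by blast
  have Qsym: "\<And>n. msym_on ?I (Qs n)" using Qs by blast
  have Qorth: "\<And>n. \<forall>h\<in>gtuples \<Gamma> N. all_nonneg h \<longrightarrow> inner_on ?I (Qs n) (tensorG N G h) = 0"
    using Qs by blast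
  have Qpsd: "\<And>n. psd_on ?I (\<lambda>s t. ?Z s t + e n * idm s t - Qs n s t)" using Qs by blast
  have z: "replicate N 0 \<in> gtuples \<Gamma> N" "all_nonneg (replicate N 0)"
    using B unfolding gtuples_def all_nonneg_def valid_G_basis_def by auto
  have trQ: "trace_on ?I (Qs n) = 0" for n
  proof -
    have "inner_on ?I (Qs n) (tensorG N G (replicate N 0)) = 0" using Qorth z by blast
    moreover have "inner_on ?I (Qs n) (tensorG N G (replicate N 0)) = inner_on ?I (Qs n) idm"
      unfolding inner_on_def using tensorG_zero[OF B] by (intro sum.cong refl) auto
    ultimately show ?thesis using inner_idm[OF fin] by simp
  qed
  have bnd: "\<forall>p\<in>?I \<times> ?I. \<exists>C. \<forall>n. \<bar>(\<lambda>n (s,t). Qs n s t) n p\<bar> \<le> C"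
  proof
    fix p assume p: "p \<in> ?I \<times> ?I"
    obtain s t where pst: "p = (s,t)" "s \<in> ?I" "t \<in> ?I" using p by auto
    have "\<forall>n. \<bar>Qs n s t\<bar> \<le> \<bar>?Z s t\<bar> + 1 + 2 * (\<Sum>u\<in>?I. \<bar>?Z u u\<bar> + 1)"
    proof
      fix n
      show "\<bar>Qs n s t\<bar> \<le> \<bar>?Z s t\<bar> + 1 + 2 * (\<Sum>u\<in>?I. \<bar>?Z u u\<bar> + 1)"
        by (rule Qbound[where e="e n", OF fin pst(2,3) trQ[of n] Qpsd[of n]]) (simp_all add: less_imp_le[OF e0(1)] e0(2))
    qed
    then show "\<exists>C. \<forall>n. \<bar>(\<lambda>n (s,t). Qs n s t) n p\<bar> \<le> C" using pst by auto
  qed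
  obtain r where r: "strict_mono r" "\<forall>p\<in>?I \<times> ?I. convergent (\<lambda>n. (\<lambda>n (s,t). Qs n s t) (r n) p)"
    using subseq_conv[OF _ bnd] fin by blast
  define Q where "Q s t = lim (\<lambda>n. Qs (r n) s t)" for s t
  have L: "\<forall>s\<in>?I. \<forall>t\<in>?I. (\<lambda>n. Qs (r n) s t) \<longlonglongrightarrow> Q s t"
  proof (intro ballI)
    fix s t assume "s \<in> ?I" "t \<in> ?I"
    then have "convergent (\<lambda>n. Qs (r n) s t)" using r(2) by fastforce
    then show "(\<lambda>n. Qs (r n) s t) \<longlonglongrightarrow> Q s t" unfolding Q_def by (simp add: convergent_LIMSEQ_iff)
  qed
  have er: "(\<lambda>n. e (r n)) \<longlonglongrightarrow> 0"
    using LIMSEQ_subseq_LIMSEQ[OF LIMSEQ_inverse_real_of_nat r(1)] unfolding e_def by (simp add: o_def)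
  have L2: "\<forall>s\<in>?I. \<forall>t\<in>?I. (\<lambda>n. ?Z s t + e (r n) * idm s t - Qs (r n) s t) \<longlonglongrightarrow> ?Z s t - Q s t"
  proof (intro ballI)
    fix s t assume "s \<in> ?I" "t \<in> ?I"
    then have "(\<lambda>n. ?Z s t + e (r n) * idm s t - Qs (r n) s t) \<longlonglongrightarrow> ?Z s t + 0 * idm s t - Q s t"
      using L er by (intro tendsto_intros) auto
    then show "(\<lambda>n. ?Z s t + e (r n) * idm s t - Qs (r n) s t) \<longlonglongrightarrow> ?Z s t - Q s t" by simp
  qed
  have psdZQ: "psd_on ?I (\<lambda>s t. ?Z s t - Q s t)"
    by (rule lim_psd[OF fin L2]) (rule Qpsd)
  have symQ: "msym_on ?I Q" unfolding msym_on_def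
  proof (intro ballI)
    fix s t assume st: "s \<in> ?I" "t \<in> ?I"
    have "(\<lambda>n. Qs (r n) s t) = (\<lambda>n. Qs (r n) t s)"
    proof (rule ext)
      fix n show "Qs (r n) s t = Qs (r n) t s" using Qsym[of "r n"] st unfolding msym_on_def by blast
    qed
    then show "Q s t = Q t s" using L st by (metis LIMSEQ_unique)
  qed
  have orthQ: "\<forall>h\<in>gtuples \<Gamma> N. all_nonneg h \<longrightarrow> inner_on ?I Q (tensorG N G h) = 0"
  proof (intro ballI impI)
    fix h assume "h \<in> gtuples \<Gamma> N" "all_nonneg h"
    then have "\<forall>n. inner_on ?I (Qs (r n)) (tensorG N G h) = 0" using Qorth by blast
    moreover have "(\<lambda>n. inner_on ?I (Qs (r n)) (tensorG N G h)) \<longlonglongrightarrow> inner_on ?I Q (tensorG N G h)"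
      by (rule lim_inner[OF fin L])
    ultimately show "inner_on ?I Q (tensorG N G h) = 0" by (simp add: LIMSEQ_const_iff)
  qed
  obtain c where c0: "\<forall>g. all_nonneg g \<longrightarrow> c g = 0"
    and cQ: "\<forall>s\<in>?I. \<forall>t\<in>?I. Q s t = tensor_expansion \<Gamma> N G c s t"
    using char_orth[OF B orthQ] by blast
  have "msym_on ?I (tensor_expansion \<Gamma> N G c)"
    unfolding msym_on_def
  proof (intro ballI)
    fix s t assume st: "s \<in> ?I" "t \<in> ?I"
    have "Q s t = Q t s" using symQ st unfolding msym_on_def by blast
    moreover have "Q s t = tensor_expansion \<Gamma> N G c s t" "Q t s = tensor_expansion \<Gamma> N G c t s"
      using cQ st by auto
    ultimately show "tensor_expansion \<Gamma> N G c s t = tensor_expansion \<Gamma> N G c t s" by simp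
  qed
  moreover have "psd_on ?I (\<lambda>s t. idm s t - TdagT D T s t - tensor_expansion \<Gamma> N G c s t)"
  proof (rule psd_cong[OF _ psdZQ], intro ballI)
    fix s t assume st: "s \<in> ?I" "t \<in> ?I"
    then have "Q s t = tensor_expansion \<Gamma> N G c s t" using cQ by blast
    then show "?Z s t - Q s t = idm s t - TdagT D T s t - tensor_expansion \<Gamma> N G c s t"
      unfolding Zm_def by simp
  qed
  ultimately show ?thesis using c0 by blast
qed



theorem proposition7:
  fixes M N D :: nat
    and T :: "nat \<Rightarrow> nat list \<Rightarrow> real"
    and \<Gamma> :: "int set"
    and G :: "int \<Rightarrow> nat \<Rightarrow> nat \<Rightarrow> real"
  assumes basis: "valid_G_basis M \<Gamma> G"
    and contr: "is_contraction M N D T"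
  shows "(has_np_dilation M N D T \<longleftrightarrow>
           (\<exists>c. (\<forall>g. all_nonneg g \<longrightarrow> c g = 0) \<and>
                msym_on (tuples M N) (tensor_expansion \<Gamma> N G c) \<and>
                psd_on (tuples M N)
                  (\<lambda>s t. idm s t - TdagT D T s t - tensor_expansion \<Gamma> N G c s t)))
       \<and> ((\<exists>c. (\<forall>g. all_nonneg g \<longrightarrow> c g = 0) \<and>
                msym_on (tuples M N) (tensor_expansion \<Gamma> N G c) \<and>
                psd_on (tuples M N)
                  (\<lambda>s t. idm s t - TdagT D T s t - tensor_expansion \<Gamma> N G c s t))
          \<longleftrightarrow>
          (\<forall>c. (\<forall>g. \<not> all_nonneg g \<longrightarrow> c g = 0) \<longrightarrow>
               psd_on (tuples M N) (tensor_expansion \<Gamma> N G c) \<longrightarrow>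
               trace_on (tuples M N) (tensor_expansion \<Gamma> N G c) = 1 \<longrightarrow>
               trace_on (tuples M N)
                 (mat_mult_on (tuples M N) (tensor_expansion \<Gamma> N G c) (TdagT D T)) \<le> 1))"
proof -
  have e12: "has_np_dilation M N D T \<longleftrightarrow>
           (\<exists>c. (\<forall>g. all_nonneg g \<longrightarrow> c g = 0) \<and>
                msym_on (tuples M N) (tensor_expansion \<Gamma> N G c) \<and>
                psd_on (tuples M N)
                  (\<lambda>s t. idm s t - TdagT D T s t - tensor_expansion \<Gamma> N G c s t))"
    using one_two[OF basis] two_one[OF basis] by blast
  have e23: "(\<exists>c. (\<forall>g. all_nonneg g \<longrightarrow> c g = 0) \<and>
                msym_on (tuples M N) (tensor_expansion \<Gamma> N G c) \<and>
                psd_on (tuples M N)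
                  (\<lambda>s t. idm s t - TdagT D T s t - tensor_expansion \<Gamma> N G c s t))
          \<longleftrightarrow>
          (\<forall>c. (\<forall>g. \<not> all_nonneg g \<longrightarrow> c g = 0) \<longrightarrow>
               psd_on (tuples M N) (tensor_expansion \<Gamma> N G c) \<longrightarrow>
               trace_on (tuples M N) (tensor_expansion \<Gamma> N G c) = 1 \<longrightarrow>
               trace_on (tuples M N)
                 (mat_mult_on (tuples M N) (tensor_expansion \<Gamma> N G c) (TdagT D T)) \<le> 1)"
  proof
    assume "\<exists>c. (\<forall>g. all_nonneg g \<longrightarrow> c g = 0) \<and>
                msym_on (tuples M N) (tensor_expansion \<Gamma> N G c) \<and>
                psd_on (tuples M N)
                  (\<lambda>s t. idm s t - TdagT D T s t - tensor_expansion \<Gamma> N G c s t)"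
    then obtain c where c0: "\<forall>g. all_nonneg g \<longrightarrow> c g = 0"
      and P: "psd_on (tuples M N) (\<lambda>s t. idm s t - TdagT D T s t - tensor_expansion \<Gamma> N G c s t)"
      by blast
    show "\<forall>d. (\<forall>g. \<not> all_nonneg g \<longrightarrow> d g = 0) \<longrightarrow>
               psd_on (tuples M N) (tensor_expansion \<Gamma> N G d) \<longrightarrow>
               trace_on (tuples M N) (tensor_expansion \<Gamma> N G d) = 1 \<longrightarrow>
               trace_on (tuples M N)
                 (mat_mult_on (tuples M N) (tensor_expansion \<Gamma> N G d) (TdagT D T)) \<le> 1"
      using two_three[OF basis c0 P] by blast
  next
    assume H3: "\<forall>c. (\<forall>g. \<not> all_nonneg g \<longrightarrow> c g = 0) \<longrightarrow>
               psd_on (tuples M N) (tensor_expansion \<Gamma> N G c) \<longrightarrow>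
               trace_on (tuples M N) (tensor_expansion \<Gamma> N G c) = 1 \<longrightarrow>
               trace_on (tuples M N)
                 (mat_mult_on (tuples M N) (tensor_expansion \<Gamma> N G c) (TdagT D T)) \<le> 1"
    show "\<exists>c. (\<forall>g. all_nonneg g \<longrightarrow> c g = 0) \<and>
                msym_on (tuples M N) (tensor_expansion \<Gamma> N G c) \<and>
                psd_on (tuples M N)
                  (\<lambda>s t. idm s t - TdagT D T s t - tensor_expansion \<Gamma> N G c s t)"
      by (rule three_two[OF basis H3])
  qed
  show ?thesis using e12 e23 by blast
qed

end
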